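(* For a linear-non-linear adjunction $\mathcal F\dashv\mathcal U$ and objects $X,J$ of $\mathscr C$, the functor $\Sigma_{(X,J)}:LS(\mathscr C)_{X\times J}\to LS(\mathscr C)_X$ is left adjoint to the reindexing functor $\pi_1^*:LS(\mathscr C)_X\to LS(\mathscr C)_{X\times J}$ along $\pi_1:X\times J\to X$, with unit $\nu_{(X\times J,A)}:=(\mathrm{id}_{X\times J},(m^{-1}_{X,J}\otimes\mathrm{id}_A);(\mathbf w_X\otimes\mathrm{id}_{\mathcal F(J)\otimes A})):(X\times J,A)\to(X\times J,\mathcal F(J)\otimes A)$ and counit $\mu_{(X,A)}:=(\mathrm{id}_X,\mathbf w_X\otimes\mathbf w_J\otimes\mathrm{id}_A):(X,\mathcal F(J)\otimes A)\to(X,A)$.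
   Context: Composition is diagrammatic; monoidal categories are strict. A linear-non-linear adjunction is a symmetric monoidal adjunction $\mathcal F\dashv\mathcal U$, $\mathcal F:\mathscr C\to\mathcal L$, between a cartesian $(\mathscr C,\times,I)$ and a symmetric monoidal $(\mathcal L,\otimes,1)$ (symmetry $\sigma$), with $\mathcal F$ strong monoidal via isomorphisms $m_{X,Y}:\mathcal F(X)\otimes\mathcal F(Y)\to\mathcal F(X\times Y)$, $m_1:1\to\mathcal F(I)$. $\mathbf c_X:=\mathcal F(\Delta_X);m_{X,X}^{-1}$, $\mathbf w_X:=\mathcal F(t_X);m_1^{-1}$ ($t_X:X\to I$ terminal). $LS(\mathscr C)$: objects $(X,A)$ with $X\in\mathscr C$, $A\in\mathcal L$; morphisms $(f,u):(X,A)\to(Y,B)$ with $f:X\to Y$, $u:\mathcal F(X)\otimes A\to B$; composition $(f,u);(g,v)=(f;g,(\mathbf c_X\otimes\mathrm{id}_A);(\mathcal F(f)\otimes u);v)$; identity $(\mathrm{id}_X,\mathbf w_X\otimes\mathrm{id}_A)$. The fibre $LS(\mathscr C)_X$ has objects $(X,A)$ and morphisms $(\mathrm{id}_X,u)$. For $f:X'\to X$, the reindexing $f^*:LS(\mathscr C)_X\to LS(\mathscr C)_{X'}$ is $(X,B)\mapsto(X',B)$, $(\mathrm{id}_X,v)\mapsto(\mathrm{id}_{X'},(\mathcal F(f)\otimes\mathrm{id}_B);v)$. $\Sigma_{(X,J)}$: on objects $(X\times J,A)\mapsto(X,\mathcal F(J)\otimes A)$; on $(\mathrm{id}_{X\times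 J},u):(X\times J,A)\to(X\times J,B)$ it gives $(\mathrm{id}_X,(\mathrm{id}_{\mathcal F(X)}\otimes\mathbf c_J\otimes\mathrm{id}_A);(\sigma_{\mathcal F(X),\mathcal F(J)}\otimes\mathrm{id}_{\mathcal F(J)\otimes A});(\mathrm{id}_{\mathcal F(J)}\otimes((m_{X,J}\otimes\mathrm{id}_A);u)))$. *)

theory Defs
  imports Main
begin

text \<open>Hom-sets are given explicitly; composition C_comp f g means "f then g".\<close>

record ('x, 'f, 'l, 'g) lnl_data =
  C_hom   :: "'x \<Rightarrow> 'x \<Rightarrow> 'f set"
  C_comp  :: "'f \<Rightarrow> 'f \<Rightarrow> 'f"
  C_id    :: "'x \<Rightarrow> 'f"
  C_prod  :: "'x \<Rightarrow> 'x \<Rightarrow> 'x"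
  C_p1    :: "'x \<Rightarrow> 'x \<Rightarrow> 'f"
  C_p2    :: "'x \<Rightarrow> 'x \<Rightarrow> 'f"
  C_pair  :: "'f \<Rightarrow> 'f \<Rightarrow> 'f"
  C_term  :: "'x"
  C_bang  :: "'x \<Rightarrow> 'f"
  L_hom   :: "'l \<Rightarrow> 'l \<Rightarrow> 'g set"
  L_comp  :: "'g \<Rightarrow> 'g \<Rightarrow> 'g"
  L_id    :: "'l \<Rightarrow> 'g"
  L_tens  :: "'l \<Rightarrow> 'l \<Rightarrow> 'l"
  L_tensm :: "'g \<Rightarrow> 'g \<Rightarrow> 'g"
  L_unit  :: "'l"
  L_sym   :: "'l \<Rightarrow> 'l \<Rightarrow> 'g"
  F_ob    :: "'x \<Rightarrow> 'l"
  F_mor   :: "'f \<Rightarrow> 'g"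
  F_m     :: "'x \<Rightarrow> 'x \<Rightarrow> 'g"
  F_minv  :: "'x \<Rightarrow> 'x \<Rightarrow> 'g"
  F_m1    :: "'g"
  F_m1inv :: "'g"
  U_ob    :: "'l \<Rightarrow> 'x"
  U_mor   :: "'g \<Rightarrow> 'f"
  U_n     :: "'l \<Rightarrow> 'l \<Rightarrow> 'f"
  U_n1    :: "'f"
  adj_eta :: "'x \<Rightarrow> 'f"
  adj_eps :: "'l \<Rightarrow> 'g"

definition C_prodm :: "('x, 'f, 'l, 'g, 'z) lnl_data_scheme \<Rightarrow> 'x \<Rightarrow> 'x \<Rightarrow> 'f \<Rightarrow> 'f \<Rightarrow> 'f" where
  "C_prodm D X Y f g = C_pair D (C_comp D (C_p1 D X Y) f) (C_comp D (C_p2 D X Y) g)"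

definition C_swap :: "('x, 'f, 'l, 'g, 'z) lnl_data_scheme \<Rightarrow> 'x \<Rightarrow> 'x \<Rightarrow> 'f" where
  "C_swap D X Y = C_pair D (C_p2 D X Y) (C_p1 D X Y)"

definition C_diag :: "('x, 'f, 'l, 'g, 'z) lnl_data_scheme \<Rightarrow> 'x \<Rightarrow> 'f" where
  "C_diag D X = C_pair D (C_id D X) (C_id D X)"

locale lnl_adjunction =
  fixes D :: "('x, 'f, 'l, 'g, 'z) lnl_data_scheme"
  assumes
    C_id_hom: "C_id D X \<in> C_hom D X X"
  and C_comp_hom: "\<lbrakk>f \<in> C_hom D X Y; g \<in> C_hom D Y Z\<rbrakk> \<Longrightarrow> C_comp D f g \<in> C_hom D X Z"
  and C_id_left: "f \<in> C_hom D X Y \<Longrightarrow> C_comp D (C_id D X) f = f"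
  and C_id_right: "f \<in> C_hom D X Y \<Longrightarrow> C_comp D f (C_id D Y) = f"
  and C_assoc: "\<lbrakk>f \<in> C_hom D X Y; g \<in> C_hom D Y Z; h \<in> C_hom D Z W\<rbrakk> \<Longrightarrow>
                 C_comp D (C_comp D f g) h = C_comp D f (C_comp D g h)"
  and C_p1_hom: "C_p1 D X Y \<in> C_hom D (C_prod D X Y) X"
  and C_p2_hom: "C_p2 D X Y \<in> C_hom D (C_prod D X Y) Y"
  and C_pair_hom: "\<lbrakk>f \<in> C_hom D Z X; g \<in> C_hom D Z Y\<rbrakk> \<Longrightarrow> C_pair D f g \<in> C_hom D Z (C_prod D X Y)"
  and C_pair_p1: "\<lbrakk>f \<in> C_hom D Z X; g \<in> C_hom D Z Y\<rbrakk> \<Longrightarrow> C_comp D (C_pair D f g) (C_p1 D X Y) = f"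
  and C_pair_p2: "\<lbrakk>f \<in> C_hom D Z X; g \<in> C_hom D Z Y\<rbrakk> \<Longrightarrow> C_comp D (C_pair D f g) (C_p2 D X Y) = g"
  and C_pair_unique: "h \<in> C_hom D Z (C_prod D X Y) \<Longrightarrow>
                 C_pair D (C_comp D h (C_p1 D X Y)) (C_comp D h (C_p2 D X Y)) = h"
  and C_bang_hom: "C_bang D X \<in> C_hom D X (C_term D)"
  and C_bang_unique: "f \<in> C_hom D X (C_term D) \<Longrightarrow> f = C_bang D X"
  and C_prod_assoc: "C_prod D (C_prod D X Y) Z = C_prod D X (C_prod D Y Z)"
  and C_prod_unit_left: "C_prod D (C_term D) X = X"
  and C_prod_unit_right: "C_prod D X (C_term D) = X"
  and C_lunitor_id: "C_p2 D (C_term D) X = C_id D X"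
  and C_runitor_id: "C_p1 D X (C_term D) = C_id D X"
  and C_associator_id:
    "C_pair D (C_comp D (C_p1 D (C_prod D X Y) Z) (C_p1 D X Y))
              (C_pair D (C_comp D (C_p1 D (C_prod D X Y) Z) (C_p2 D X Y)) (C_p2 D (C_prod D X Y) Z))
     = C_id D (C_prod D (C_prod D X Y) Z)"
  and L_id_hom: "L_id D A \<in> L_hom D A A"
  and L_comp_hom: "\<lbrakk>r \<in> L_hom D A B; s \<in> L_hom D B C\<rbrakk> \<Longrightarrow> L_comp D r s \<in> L_hom D A C"
  and L_id_left: "r \<in> L_hom D A B \<Longrightarrow> L_comp D (L_id D A) r = r"
  and L_id_right: "r \<in> L_hom D A B \<Longrightarrow> L_comp D r (L_id D B) = r"
  and L_assoc: "\<lbrakk>r \<in> L_hom D A B; s \<in> L_hom D B C; t \<in> L_hom D C E\<rbrakk> \<Longrightarrow>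
                 L_comp D (L_comp D r s) t = L_comp D r (L_comp D s t)"
  and L_tensm_hom: "\<lbrakk>r \<in> L_hom D A B; s \<in> L_hom D A' B'\<rbrakk> \<Longrightarrow>
                 L_tensm D r s \<in> L_hom D (L_tens D A A') (L_tens D B B')"
  and L_tensm_id: "L_tensm D (L_id D A) (L_id D B) = L_id D (L_tens D A B)"
  and L_tensm_comp: "\<lbrakk>r \<in> L_hom D A B; s \<in> L_hom D B C; r' \<in> L_hom D A' B'; s' \<in> L_hom D B' C'\<rbrakk> \<Longrightarrow>
                 L_tensm D (L_comp D r s) (L_comp D r' s') = L_comp D (L_tensm D r r') (L_tensm D s s')"
  and L_tens_assoc: "L_tens D (L_tens D A B) C = L_tens D A (L_tens D B C)"
  and L_tens_unit_left: "L_tens D (L_unit D) A = A"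
  and L_tens_unit_right: "L_tens D A (L_unit D) = A"
  and L_tensm_assoc: "\<lbrakk>r \<in> L_hom D A B; s \<in> L_hom D A' B'; t \<in> L_hom D A'' B''\<rbrakk> \<Longrightarrow>
                 L_tensm D (L_tensm D r s) t = L_tensm D r (L_tensm D s t)"
  and L_tensm_unit_left: "r \<in> L_hom D A B \<Longrightarrow> L_tensm D (L_id D (L_unit D)) r = r"
  and L_tensm_unit_right: "r \<in> L_hom D A B \<Longrightarrow> L_tensm D r (L_id D (L_unit D)) = r"
  and L_sym_hom: "L_sym D A B \<in> L_hom D (L_tens D A B) (L_tens D B A)"
  and L_sym_nat: "\<lbrakk>r \<in> L_hom D A B; s \<in> L_hom D A' B'\<rbrakk> \<Longrightarrow>
                 L_comp D (L_tensm D r s) (L_sym D B B') = L_comp D (L_sym D A A') (L_tensm D s r)"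
  and L_sym_inv: "L_comp D (L_sym D A B) (L_sym D B A) = L_id D (L_tens D A B)"
  and L_sym_hexagon: "L_sym D A (L_tens D B C) =
                 L_comp D (L_tensm D (L_sym D A B) (L_id D C)) (L_tensm D (L_id D B) (L_sym D A C))"
  and F_hom: "f \<in> C_hom D X Y \<Longrightarrow> F_mor D f \<in> L_hom D (F_ob D X) (F_ob D Y)"
  and F_id: "F_mor D (C_id D X) = L_id D (F_ob D X)"
  and F_comp: "\<lbrakk>f \<in> C_hom D X Y; g \<in> C_hom D Y Z\<rbrakk> \<Longrightarrow>
                 F_mor D (C_comp D f g) = L_comp D (F_mor D f) (F_mor D g)"
  and F_m_hom: "F_m D X Y \<in> L_hom D (L_tens D (F_ob D X) (F_ob D Y)) (F_ob D (C_prod D X Y))"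
  and F_minv_hom: "F_minv D X Y \<in> L_hom D (F_ob D (C_prod D X Y)) (L_tens D (F_ob D X) (F_ob D Y))"
  and F_m_minv: "L_comp D (F_m D X Y) (F_minv D X Y) = L_id D (L_tens D (F_ob D X) (F_ob D Y))"
  and F_minv_m: "L_comp D (F_minv D X Y) (F_m D X Y) = L_id D (F_ob D (C_prod D X Y))"
  and F_m1_hom: "F_m1 D \<in> L_hom D (L_unit D) (F_ob D (C_term D))"
  and F_m1inv_hom: "F_m1inv D \<in> L_hom D (F_ob D (C_term D)) (L_unit D)"
  and F_m1_m1inv: "L_comp D (F_m1 D) (F_m1inv D) = L_id D (L_unit D)"
  and F_m1inv_m1: "L_comp D (F_m1inv D) (F_m1 D) = L_id D (F_ob D (C_term D))"
  and F_m_nat: "\<lbrakk>f \<in> C_hom D X X'; g \<in> C_hom D Y Y'\<rbrakk> \<Longrightarrow>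
                 L_comp D (L_tensm D (F_mor D f) (F_mor D g)) (F_m D X' Y')
                 = L_comp D (F_m D X Y) (F_mor D (C_prodm D X Y f g))"
  and F_m_assoc: "L_comp D (L_tensm D (F_m D X Y) (L_id D (F_ob D Z))) (F_m D (C_prod D X Y) Z)
                 = L_comp D (L_tensm D (L_id D (F_ob D X)) (F_m D Y Z)) (F_m D X (C_prod D Y Z))"
  and F_m_unit_left: "L_comp D (L_tensm D (F_m1 D) (L_id D (F_ob D X))) (F_m D (C_term D) X)
                 = L_id D (F_ob D X)"
  and F_m_unit_right: "L_comp D (L_tensm D (L_id D (F_ob D X)) (F_m1 D)) (F_m D X (C_term D))
                 = L_id D (F_ob D X)"
  and F_m_sym: "L_comp D (L_sym D (F_ob D X) (F_ob D Y)) (F_m D Y X)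
                 = L_comp D (F_m D X Y) (F_mor D (C_swap D X Y))"
  and U_hom: "r \<in> L_hom D A B \<Longrightarrow> U_mor D r \<in> C_hom D (U_ob D A) (U_ob D B)"
  and U_id: "U_mor D (L_id D A) = C_id D (U_ob D A)"
  and U_comp: "\<lbrakk>r \<in> L_hom D A B; s \<in> L_hom D B C\<rbrakk> \<Longrightarrow>
                 U_mor D (L_comp D r s) = C_comp D (U_mor D r) (U_mor D s)"
  and U_n_hom: "U_n D A B \<in> C_hom D (C_prod D (U_ob D A) (U_ob D B)) (U_ob D (L_tens D A B))"
  and U_n1_hom: "U_n1 D \<in> C_hom D (C_term D) (U_ob D (L_unit D))"
  and U_n_nat: "\<lbrakk>r \<in> L_hom D A A'; s \<in> L_hom D B B'\<rbrakk> \<Longrightarrow>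
                 C_comp D (C_prodm D (U_ob D A) (U_ob D B) (U_mor D r) (U_mor D s)) (U_n D A' B')
                 = C_comp D (U_n D A B) (U_mor D (L_tensm D r s))"
  and U_n_assoc: "C_comp D (C_prodm D (C_prod D (U_ob D A) (U_ob D B)) (U_ob D C) (U_n D A B) (C_id D (U_ob D C)))
                          (U_n D (L_tens D A B) C)
                 = C_comp D (C_prodm D (U_ob D A) (C_prod D (U_ob D B) (U_ob D C)) (C_id D (U_ob D A)) (U_n D B C))
                          (U_n D A (L_tens D B C))"
  and U_n_unit_left: "C_comp D (C_prodm D (C_term D) (U_ob D A) (U_n1 D) (C_id D (U_ob D A))) (U_n D (L_unit D) A)
                 = C_id D (U_ob D A)"
  and U_n_unit_right: "C_comp D (C_prodm D (U_ob D A) (C_term D) (C_id D (U_ob D A)) (U_n1 D)) (U_n D A (L_unit D))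
                 = C_id D (U_ob D A)"
  and U_n_sym: "C_comp D (C_swap D (U_ob D A) (U_ob D B)) (U_n D B A)
                 = C_comp D (U_n D A B) (U_mor D (L_sym D A B))"
  and eta_hom: "adj_eta D X \<in> C_hom D X (U_ob D (F_ob D X))"
  and eps_hom: "adj_eps D A \<in> L_hom D (F_ob D (U_ob D A)) A"
  and eta_nat: "f \<in> C_hom D X Y \<Longrightarrow>
                 C_comp D f (adj_eta D Y) = C_comp D (adj_eta D X) (U_mor D (F_mor D f))"
  and eps_nat: "s \<in> L_hom D A B \<Longrightarrow>
                 L_comp D (F_mor D (U_mor D s)) (adj_eps D B) = L_comp D (adj_eps D A) s"
  and adj_triangle_F: "L_comp D (F_mor D (adj_eta D X)) (adj_eps D (F_ob D X)) = L_id D (F_ob D X)"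
  and adj_triangle_U: "C_comp D (adj_eta D (U_ob D A)) (U_mor D (adj_eps D A)) = C_id D (U_ob D A)"
  and eta_monoidal: "adj_eta D (C_prod D X Y) =
                 C_comp D (C_comp D (C_prodm D X Y (adj_eta D X) (adj_eta D Y)) (U_n D (F_ob D X) (F_ob D Y)))
                          (U_mor D (F_m D X Y))"
  and eta_monoidal_unit: "adj_eta D (C_term D) = C_comp D (U_n1 D) (U_mor D (F_m1 D))"
  and eps_monoidal: "L_comp D (L_comp D (F_m D (U_ob D A) (U_ob D B)) (F_mor D (U_n D A B))) (adj_eps D (L_tens D A B))
                 = L_tensm D (adj_eps D A) (adj_eps D B)"
  and eps_monoidal_unit: "L_comp D (L_comp D (F_m1 D) (F_mor D (U_n1 D))) (adj_eps D (L_unit D))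
                 = L_id D (L_unit D)"

definition ls_c :: "('x, 'f, 'l, 'g, 'z) lnl_data_scheme \<Rightarrow> 'x \<Rightarrow> 'g" where
  "ls_c D X = L_comp D (F_mor D (C_diag D X)) (F_minv D X X)"

definition ls_w :: "('x, 'f, 'l, 'g, 'z) lnl_data_scheme \<Rightarrow> 'x \<Rightarrow> 'g" where
  "ls_w D X = L_comp D (F_mor D (C_bang D X)) (F_m1inv D)"

definition ls_hom :: "('x, 'f, 'l, 'g, 'z) lnl_data_scheme \<Rightarrow> 'x \<times> 'l \<Rightarrow> 'x \<times> 'l \<Rightarrow> ('f \<times> 'g) set" where
  "ls_hom D XA YB = {(f, u). f \<in> C_hom D (fst XA) (fst YB) \<and>
                              u \<in> L_hom D (L_tens D (F_ob D (fst XA)) (snd XA)) (snd YB)}"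

definition ls_comp :: "('x, 'f, 'l, 'g, 'z) lnl_data_scheme \<Rightarrow> 'x \<times> 'l \<Rightarrow> 'f \<times> 'g \<Rightarrow> 'f \<times> 'g \<Rightarrow> 'f \<times> 'g" where
  "ls_comp D XA fu gv =
     (C_comp D (fst fu) (fst gv),
      L_comp D (L_comp D (L_tensm D (ls_c D (fst XA)) (L_id D (snd XA)))
                         (L_tensm D (F_mor D (fst fu)) (snd fu)))
               (snd gv))"

definition ls_id :: "('x, 'f, 'l, 'g, 'z) lnl_data_scheme \<Rightarrow> 'x \<times> 'l \<Rightarrow> 'f \<times> 'g" where
  "ls_id D XA = (C_id D (fst XA), L_tensm D (ls_w D (fst XA)) (L_id D (snd XA)))"

definition fib_hom :: "('x, 'f, 'l, 'g, 'z) lnl_data_scheme \<Rightarrow> 'x \<Rightarrow> 'l \<Rightarrow> 'l \<Rightarrow> ('f \<times> 'g) set" where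
  "fib_hom D X A B = {fu \<in> ls_hom D (X, A) (X, B). fst fu = C_id D X}"

definition reindex_ob :: "'x \<Rightarrow> 'x \<times> 'l \<Rightarrow> 'x \<times> 'l" where
  "reindex_ob X' XB = (X', snd XB)"

definition reindex_mor :: "('x, 'f, 'l, 'g, 'z) lnl_data_scheme \<Rightarrow> 'f \<Rightarrow> 'x \<Rightarrow> 'x \<times> 'l \<Rightarrow> 'f \<times> 'g \<Rightarrow> 'f \<times> 'g" where
  "reindex_mor D f X' XA v = (C_id D X', L_comp D (L_tensm D (F_mor D f) (L_id D (snd XA))) (snd v))"

definition Sigma_ob :: "('x, 'f, 'l, 'g, 'z) lnl_data_scheme \<Rightarrow> 'x \<Rightarrow> 'x \<Rightarrow> 'x \<times> 'l \<Rightarrow> 'x \<times> 'l" where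
  "Sigma_ob D X J XJA = (X, L_tens D (F_ob D J) (snd XJA))"

definition Sigma_mor :: "('x, 'f, 'l, 'g, 'z) lnl_data_scheme \<Rightarrow> 'x \<Rightarrow> 'x \<Rightarrow> 'x \<times> 'l \<Rightarrow> 'f \<times> 'g \<Rightarrow> 'f \<times> 'g" where
  "Sigma_mor D X J XJA u =
     (C_id D X,
      L_comp D (L_comp D
        (L_tensm D (L_tensm D (L_id D (F_ob D X)) (ls_c D J)) (L_id D (snd XJA)))
        (L_tensm D (L_sym D (F_ob D X) (F_ob D J)) (L_id D (L_tens D (F_ob D J) (snd XJA)))))
        (L_tensm D (L_id D (F_ob D J))
                   (L_comp D (L_tensm D (F_m D X J) (L_id D (snd XJA))) (snd u))))"

definition Sigma_unit :: "('x, 'f, 'l, 'g, 'z) lnl_data_scheme \<Rightarrow> 'x \<Rightarrow> 'x \<Rightarrow> 'x \<times> 'l \<Rightarrow> 'f \<times> 'g" where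
  "Sigma_unit D X J XJA =
     (C_id D (C_prod D X J),
      L_comp D (L_tensm D (F_minv D X J) (L_id D (snd XJA)))
               (L_tensm D (ls_w D X) (L_id D (L_tens D (F_ob D J) (snd XJA)))))"

definition Sigma_counit :: "('x, 'f, 'l, 'g, 'z) lnl_data_scheme \<Rightarrow> 'x \<Rightarrow> 'x \<Rightarrow> 'x \<times> 'l \<Rightarrow> 'f \<times> 'g" where
  "Sigma_counit D X J XA =
     (C_id D X, L_tensm D (L_tensm D (ls_w D X) (ls_w D J)) (L_id D (snd XA)))"

end

theory Submission imports Defs begin

named_theorems ty

context lnl_adjunction begin

abbreviation hom :: "'g \<Rightarrow> 'l \<Rightarrow> 'l \<Rightarrow> bool" where "hom r A B \<equiv> r \<in> L_hom D A B"
abbreviation chom :: "'f \<Rightarrow> 'x \<Rightarrow> 'x \<Rightarrow> bool" where "chom f A B \<equiv> f \<in> C_hom D A B"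
abbreviation lc (infixl ";;" 55) where "r ;; s \<equiv> L_comp D r s"
abbreviation lt (infixr "\<otimes>" 60) where "r \<otimes> s \<equiv> L_tensm D r s"
abbreviation lo (infixr "\<odot>" 60) where "A \<odot> B \<equiv> L_tens D A B"
abbreviation li ("\<iota>") where "\<iota> A \<equiv> L_id D A"
abbreviation FO where "FO X \<equiv> F_ob D X"
abbreviation FM where "FM f \<equiv> F_mor D f"

lemmas nrm = L_tens_assoc L_tens_unit_left L_tens_unit_right C_prod_assoc C_prod_unit_left C_prod_unit_right

lemma ty_comp: "hom r A B \<Longrightarrow> hom s B' C \<Longrightarrow> B' = B \<Longrightarrow> P = A \<Longrightarrow> Q = C \<Longrightarrow> hom (r ;; s) P Q"
  using L_comp_hom by blast
lemma ty_tens: "hom r A B \<Longrightarrow> hom s A' B' \<Longrightarrow> P = A \<odot> A' \<Longrightarrow> Q = B \<odot> B' \<Longrightarrow> hom (r \<otimes> s) P Q"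
  using L_tensm_hom by blast
lemma ty_id: "P = A \<Longrightarrow> Q = A \<Longrightarrow> hom (\<iota> A) P Q"
  using L_id_hom by blast
lemma ty_F: "chom f X Y \<Longrightarrow> P = FO X \<Longrightarrow> Q = FO Y \<Longrightarrow> hom (FM f) P Q"
  using F_hom by blast
lemma ty_m: "P = FO X \<odot> FO Y \<Longrightarrow> Q = FO (C_prod D X Y) \<Longrightarrow> hom (F_m D X Y) P Q"
  using F_m_hom by blast
lemma ty_minv: "Q = FO X \<odot> FO Y \<Longrightarrow> P = FO (C_prod D X Y) \<Longrightarrow> hom (F_minv D X Y) P Q"
  using F_minv_hom by blast
lemma ty_m1: "P = L_unit D \<Longrightarrow> Q = FO (C_term D) \<Longrightarrow> hom (F_m1 D) P Q"
  using F_m1_hom by blast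
lemma ty_m1inv: "Q = L_unit D \<Longrightarrow> P = FO (C_term D) \<Longrightarrow> hom (F_m1inv D) P Q"
  using F_m1inv_hom by blast
lemma ty_sym: "P = A \<odot> B \<Longrightarrow> Q = B \<odot> A \<Longrightarrow> hom (L_sym D A B) P Q"
  using L_sym_hom by blast

lemma ty_ccomp: "chom r A B \<Longrightarrow> chom s B' C \<Longrightarrow> B' = B \<Longrightarrow> P = A \<Longrightarrow> Q = C \<Longrightarrow> chom (C_comp D r s) P Q"
  using C_comp_hom by blast
lemma ty_cid: "P = A \<Longrightarrow> Q = A \<Longrightarrow> chom (C_id D A) P Q"
  using C_id_hom by blast
lemma ty_p1: "P = C_prod D X Y \<Longrightarrow> Q = X \<Longrightarrow> chom (C_p1 D X Y) P Q"
  using C_p1_hom by blast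
lemma ty_p2: "P = C_prod D X Y \<Longrightarrow> Q = Y \<Longrightarrow> chom (C_p2 D X Y) P Q"
  using C_p2_hom by blast
lemma ty_pair: "chom f Z X \<Longrightarrow> chom g Z' Y \<Longrightarrow> Z' = Z \<Longrightarrow> P = Z \<Longrightarrow> Q = C_prod D X Y \<Longrightarrow> chom (C_pair D f g) P Q"
  using C_pair_hom by blast
lemma ty_bang: "P = X \<Longrightarrow> Q = C_term D \<Longrightarrow> chom (C_bang D X) P Q"
  using C_bang_hom by blast
lemma ty_diag: "P = X \<Longrightarrow> Q = C_prod D X X \<Longrightarrow> chom (C_diag D X) P Q"
  unfolding C_diag_def using C_pair_hom C_id_hom by blast
lemma ty_prodm: "chom f X X' \<Longrightarrow> chom g Y Y' \<Longrightarrow> P = C_prod D X Y \<Longrightarrow> Q = C_prod D X' Y' \<Longrightarrow> chom (C_prodm D X Y f g) P Q"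
  unfolding C_prodm_def by (rule ty_pair ty_ccomp ty_p1 ty_p2 refl | assumption)+
lemma ty_swap: "P = C_prod D X Y \<Longrightarrow> Q = C_prod D Y X \<Longrightarrow> chom (C_swap D X Y) P Q"
  unfolding C_swap_def by (rule ty_pair ty_ccomp ty_p1 ty_p2 refl | assumption)+
lemma ty_c: "P = FO X \<Longrightarrow> Q = FO X \<odot> FO X \<Longrightarrow> hom (ls_c D X) P Q"
  unfolding ls_c_def by (rule ty_comp ty_F ty_diag ty_minv refl | assumption)+
lemma ty_w: "P = FO X \<Longrightarrow> Q = L_unit D \<Longrightarrow> hom (ls_w D X) P Q"
  unfolding ls_w_def by (rule ty_comp ty_F ty_bang ty_m1inv refl | assumption)+

declare ty_comp[ty] ty_tens[ty] ty_id[ty] ty_F[ty] ty_m[ty] ty_minv[ty] ty_m1[ty] ty_m1inv[ty] ty_sym[ty] ty_ccomp[ty] ty_cid[ty] ty_p1[ty] ty_p2[ty] ty_pair[ty] ty_bang[ty] ty_diag[ty] ty_prodm[ty] ty_swap[ty] ty_c[ty] ty_w[ty]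
lemmas ty_all_unused = ty_comp ty_tens ty_id ty_F ty_m ty_minv ty_m1 ty_m1inv ty_sym ty_ccomp ty_cid ty_p1 ty_p2 ty_pair ty_bang ty_diag ty_prodm ty_swap ty_c ty_w

lemma ctyconv: "chom r A B \<Longrightarrow> P = A \<Longrightarrow> Q = B \<Longrightarrow> chom r P Q" by simp
lemma tyconv: "hom r A B \<Longrightarrow> P = A \<Longrightarrow> Q = B \<Longrightarrow> hom r P Q" by simp


abbreviation cc (infixl "\<bullet>" 55) where "f \<bullet> g \<equiv> C_comp D f g"
abbreviation pr where "pr f g \<equiv> C_pair D f g"
abbreviation CP where "CP X Y \<equiv> C_prod D X Y"
abbreviation cid where "cid X \<equiv> C_id D X"
abbreviation p1 where "p1 X Y \<equiv> C_p1 D X Y"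
abbreviation p2 where "p2 X Y \<equiv> C_p2 D X Y"
abbreviation ctyp where "ctyp f X Y \<equiv> f \<in> C_hom D X Y"


lemma comp_pair:
  assumes h: "chom h W Z" and f: "chom f Z X" and g: "chom g Z Y"
  shows "h \<bullet> pr f g = pr (h \<bullet> f) (h \<bullet> g)"
proof -
  have t: "chom (h \<bullet> pr f g) W (CP X Y)" using h f g by (meson C_comp_hom C_pair_hom)
  have e1: "(h \<bullet> pr f g) \<bullet> p1 X Y = h \<bullet> f"
    by (subst C_assoc; ((rule ty ctyconv[OF h] ctyconv[OF f] ctyconv[OF g] refl, ((rule ty ctyconv[OF h] ctyconv[OF f] ctyconv[OF g] refl | simp add: nrm)+)?)?)) (subst C_pair_p1[OF f g], rule refl)
  have e2: "(h \<bullet> pr f g) \<bullet> p2 X Y = h \<bullet> g"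
    by (subst C_assoc; ((rule ty ctyconv[OF h] ctyconv[OF f] ctyconv[OF g] refl, ((rule ty ctyconv[OF h] ctyconv[OF f] ctyconv[OF g] refl | simp add: nrm)+)?)?)) (subst C_pair_p2[OF f g], rule refl)
  show ?thesis using C_pair_unique[OF t] e1 e2 by simp
qed

lemma pair_ext:
  assumes a: "chom a Z (CP X Y)" and b: "chom b Z (CP X Y)"
    and "a \<bullet> p1 X Y = b \<bullet> p1 X Y" and "a \<bullet> p2 X Y = b \<bullet> p2 X Y"
  shows "a = b"
proof -
  have "a = pr (a \<bullet> p1 X Y) (a \<bullet> p2 X Y)" by (rule C_pair_unique[OF a, symmetric])
  also have "\<dots> = pr (b \<bullet> p1 X Y) (b \<bullet> p2 X Y)" by (simp only: assms(3,4))
  also have "\<dots> = b" by (rule C_pair_unique[OF b])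
  finally show ?thesis .
qed

lemma assoc_id: "pr (p1 (CP X Y) Z \<bullet> p1 X Y) (pr (p1 (CP X Y) Z \<bullet> p2 X Y) (p2 (CP X Y) Z)) = cid (CP X (CP Y Z))"
  by (rule C_associator_id[of X Y Z, unfolded C_prod_assoc])

lemma pa1: "p1 X (CP Y Z) = p1 (CP X Y) Z \<bullet> p1 X Y"
proof -
  have "p1 X (CP Y Z) = cid (CP X (CP Y Z)) \<bullet> p1 X (CP Y Z)" by (rule C_id_left[symmetric], rule C_p1_hom)
  also have "\<dots> = p1 (CP X Y) Z \<bullet> p1 X Y"
    by (subst assoc_id[symmetric], subst C_pair_p1; ((rule ty refl, ((rule ty refl | simp add: nrm)+)?)?)) ((rule refl | simp only: nrm)?)
  finally show ?thesis .
qed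

lemma pa2': "p2 X (CP Y Z) = pr (p1 (CP X Y) Z \<bullet> p2 X Y) (p2 (CP X Y) Z)"
proof -
  have "p2 X (CP Y Z) = cid (CP X (CP Y Z)) \<bullet> p2 X (CP Y Z)" by (rule C_id_left[symmetric], rule C_p2_hom)
  also have "\<dots> = pr (p1 (CP X Y) Z \<bullet> p2 X Y) (p2 (CP X Y) Z)"
    by (subst assoc_id[symmetric], subst C_pair_p2; ((rule ty refl, ((rule ty refl | simp add: nrm)+)?)?)) ((rule refl | simp only: nrm)?)
  finally show ?thesis .
qed

lemma pa2: "p2 X (CP Y Z) \<bullet> p1 Y Z = p1 (CP X Y) Z \<bullet> p2 X Y"
  by (subst pa2', subst C_pair_p1; ((rule ty refl, ((rule ty refl | simp add: nrm)+)?)?)) ((rule refl | simp only: nrm)?)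
lemma pa3: "p2 X (CP Y Z) \<bullet> p2 Y Z = p2 (CP X Y) Z"
  by (subst pa2', subst C_pair_p2; ((rule ty refl, ((rule ty refl | simp add: nrm)+)?)?)) ((rule refl | simp only: nrm)?)



lemma pa4: "p1 (CP X Y) Z = pr (p1 X (CP Y Z)) (p2 X (CP Y Z) \<bullet> p1 Y Z)"
  apply (rule pair_ext[where X=X and Y=Y and Z="CP X (CP Y Z)"]; ((rule ty refl, ((rule ty refl | simp add: nrm)+)?)?)?)
   apply (subst C_pair_p1; ((rule ty refl, ((rule ty refl | simp add: nrm)+)?)?)) apply (rule pa1[symmetric])
  apply (subst C_pair_p2; ((rule ty refl, ((rule ty refl | simp add: nrm)+)?)?)) apply (rule pa2[symmetric])
  done

lemma pa3': "p2 (CP X Y) Z = p2 X (CP Y Z) \<bullet> p2 Y Z" by (rule pa3[symmetric])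

lemma pair_I2: assumes f: "chom f Z (C_term D)" and g: "chom g Z Y" shows "pr f g = g"
proof -
  have "pr f g = pr f g \<bullet> cid Y" by (rule C_id_right[symmetric]; ((rule ty ctyconv[OF f] ctyconv[OF g] refl, ((rule ty ctyconv[OF f] ctyconv[OF g] refl | simp add: nrm)+)?)?))
  also have "\<dots> = pr f g \<bullet> p2 (C_term D) Y" by (simp only: C_lunitor_id)
  also have "\<dots> = g" by (rule C_pair_p2[OF f g])
  finally show ?thesis .
qed

lemma pair_I1: assumes f: "chom f Z X" and g: "chom g Z (C_term D)" shows "pr f g = f"
proof -
  have "pr f g = pr f g \<bullet> cid X" by (rule C_id_right[symmetric]; ((rule ty ctyconv[OF f] ctyconv[OF g] refl, ((rule ty ctyconv[OF f] ctyconv[OF g] refl | simp add: nrm)+)?)?))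
  also have "\<dots> = pr f g \<bullet> p1 X (C_term D)" by (simp only: C_runitor_id)
  also have "\<dots> = f" by (rule C_pair_p1[OF f g])
  finally show ?thesis .
qed

lemma pair_id: "pr (p1 X Y) (p2 X Y) = cid (CP X Y)"
proof -
  have "pr (cid (CP X Y) \<bullet> p1 X Y) (cid (CP X Y) \<bullet> p2 X Y) = cid (CP X Y)" by (rule C_pair_unique; ((rule ty refl, ((rule ty refl | simp add: nrm)+)?)?))
  moreover have "cid (CP X Y) \<bullet> p1 X Y = p1 X Y" by (rule C_id_left; ((rule ty refl, ((rule ty refl | simp add: nrm)+)?)?))
  moreover have "cid (CP X Y) \<bullet> p2 X Y = p2 X Y" by (rule C_id_left; ((rule ty refl, ((rule ty refl | simp add: nrm)+)?)?))
  ultimately show ?thesis by simp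
qed

lemma bang_comp: assumes f: "chom f X Y" shows "f \<bullet> C_bang D Y = C_bang D X"
  by (rule C_bang_unique; ((rule ty ctyconv[OF f] refl, ((rule ty ctyconv[OF f] refl | simp add: nrm)+)?)?))

lemma diag_p1: "C_diag D X \<bullet> p1 X X = cid X"
  unfolding C_diag_def by (rule C_pair_p1; ((rule ty refl, ((rule ty refl | simp add: nrm)+)?)?))
lemma diag_p2: "C_diag D X \<bullet> p2 X X = cid X"
  unfolding C_diag_def by (rule C_pair_p2; ((rule ty refl, ((rule ty refl | simp add: nrm)+)?)?))

lemma comp_prodm: assumes h: "chom h W (CP X Y)" and f: "chom f X X'" and g: "chom g Y Y'"
  shows "h \<bullet> C_prodm D X Y f g = pr (h \<bullet> p1 X Y \<bullet> f) (h \<bullet> p2 X Y \<bullet> g)"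
  unfolding C_prodm_def
  apply (subst comp_pair; ((rule ty ctyconv[OF h] ctyconv[OF f] ctyconv[OF g] refl, ((rule ty ctyconv[OF h] ctyconv[OF f] ctyconv[OF g] refl | simp add: nrm)+)?)?)) apply (subst C_assoc; ((rule ty ctyconv[OF h] ctyconv[OF f] ctyconv[OF g] refl, ((rule ty ctyconv[OF h] ctyconv[OF f] ctyconv[OF g] refl | simp add: nrm)+)?)?))+ apply ((rule refl | simp only: nrm)?) done

lemma pair_prodm: assumes a: "chom a W X" and b: "chom b W Y" and f: "chom f X X'" and g: "chom g Y Y'"
  shows "pr a b \<bullet> C_prodm D X Y f g = pr (a \<bullet> f) (b \<bullet> g)"
  apply (subst comp_prodm; ((rule ty ctyconv[OF a] ctyconv[OF b] ctyconv[OF f] ctyconv[OF g] refl, ((rule ty ctyconv[OF a] ctyconv[OF b] ctyconv[OF f] ctyconv[OF g] refl | simp add: nrm)+)?)?)) apply (subst C_pair_p1 C_pair_p2; ((rule ty ctyconv[OF a] ctyconv[OF b] ctyconv[OF f] ctyconv[OF g] refl, ((rule ty ctyconv[OF a] ctyconv[OF b] ctyconv[OF f] ctyconv[OF g] refl | simp add: nrm)+)?)?))+ apply ((rule refl | simp only: nrm)?) done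



lemma prodm_p1: assumes f: "chom f X X'" and g: "chom g Y Y'"
  shows "C_prodm D X Y f g \<bullet> p1 X' Y' = p1 X Y \<bullet> f"
  unfolding C_prodm_def by (rule C_pair_p1; ((rule ty ctyconv[OF f] ctyconv[OF g] refl, ((rule ty ctyconv[OF f] ctyconv[OF g] refl | simp add: nrm)+)?)?))
lemma prodm_p2: assumes f: "chom f X X'" and g: "chom g Y Y'"
  shows "C_prodm D X Y f g \<bullet> p2 X' Y' = p2 X Y \<bullet> g"
  unfolding C_prodm_def by (rule C_pair_p2; ((rule ty ctyconv[OF f] ctyconv[OF g] refl, ((rule ty ctyconv[OF f] ctyconv[OF g] refl | simp add: nrm)+)?)?))

lemma cidl: "chom f X Y \<Longrightarrow> cid X' \<bullet> f = f" if "X' = X" using that C_id_left by blast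
lemma cidr: "chom f X Y \<Longrightarrow> f \<bullet> cid Y' = f" if "Y' = Y" using that C_id_right by blast

abbreviation kk where "kk X J \<equiv> pr (p2 X J) (cid (CP X J))"

lemma g1eq: "C_prodm D X J (cid X) (C_diag D J) = pr (cid (CP X J)) (p2 X J)"
  apply (rule pair_ext[where X="CP X J" and Y=J and Z="CP X J"]; ((rule ty refl, ((rule ty refl | simp add: nrm)+)?)?)?)
   apply (subst C_pair_p1; ((rule ty refl, ((rule ty refl | simp add: nrm)+)?)?))
   apply (subst pa4)
   apply (subst comp_pair; ((rule ty refl, ((rule ty refl | simp add: nrm)+)?)?))
   apply (subst prodm_p1; ((rule ty refl, ((rule ty refl | simp add: nrm)+)?)?))
   apply (subst C_assoc[symmetric]; ((rule ty refl, ((rule ty refl | simp add: nrm)+)?)?))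
   apply (subst prodm_p2; ((rule ty refl, ((rule ty refl | simp add: nrm)+)?)?))
   apply (subst C_assoc; ((rule ty refl, ((rule ty refl | simp add: nrm)+)?)?))
   apply (subst diag_p1)
   apply (subst cidr; ((rule ty refl, ((rule ty refl | simp add: nrm)+)?)?))
   apply (subst cidr; ((rule ty refl, ((rule ty refl | simp add: nrm)+)?)?))
   apply (rule pair_id)
  apply (subst C_pair_p2; ((rule ty refl, ((rule ty refl | simp add: nrm)+)?)?))
  apply (subst pa3')
  apply (subst C_assoc[symmetric]; ((rule ty refl, ((rule ty refl | simp add: nrm)+)?)?))
  apply (subst prodm_p2; ((rule ty refl, ((rule ty refl | simp add: nrm)+)?)?))
  apply (subst C_assoc; ((rule ty refl, ((rule ty refl | simp add: nrm)+)?)?))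
  apply (subst diag_p2)
  apply (subst cidr; ((rule ty refl, ((rule ty refl | simp add: nrm)+)?)?))
  done



lemma pair_ext2: assumes a: "chom a Z (CP X Y)" and f: "chom f Z X" and g: "chom g Z Y"
  and "a \<bullet> p1 X Y = f" and "a \<bullet> p2 X Y = g" shows "a = pr f g"
  apply (rule pair_ext[OF a]; ((rule ty ctyconv[OF f] ctyconv[OF g] refl, ((rule ty ctyconv[OF f] ctyconv[OF g] refl | simp add: nrm)+)?)?))
  using assms(4,5) C_pair_p1[OF f g] C_pair_p2[OF f g] by simp_all

lemma CI_K: "C_prodm D X J (cid X) (C_diag D J) \<bullet> C_prodm D (CP X J) J (C_swap D X J) (cid J) = kk X J"
  apply (subst g1eq)
  apply (subst pair_prodm; ((rule ty refl, ((rule ty refl | simp add: nrm)+)?)?))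
  apply (subst cidl; ((rule ty refl, ((rule ty refl | simp add: nrm)+)?)?))
  apply (subst cidr; ((rule ty refl, ((rule ty refl | simp add: nrm)+)?)?))
  apply (rule sym)
  apply (rule pair_ext2[where X="CP J X" and Y=J]; ((rule ty refl, ((rule ty refl | simp add: nrm)+)?)?)?)
   apply (subst pa4)
   apply (subst comp_pair; ((rule ty refl, ((rule ty refl | simp add: nrm)+)?)?))
   apply (subst C_pair_p1; ((rule ty refl, ((rule ty refl | simp add: nrm)+)?)?))
   apply (subst C_assoc[symmetric]; ((rule ty refl, ((rule ty refl | simp add: nrm)+)?)?))
   apply (subst C_pair_p2; ((rule ty refl, ((rule ty refl | simp add: nrm)+)?)?))
   apply (subst cidl; ((rule ty refl, ((rule ty refl | simp add: nrm)+)?)?))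
   apply (simp only: C_swap_def)
  apply (subst pa3')
  apply (subst C_assoc[symmetric]; ((rule ty refl, ((rule ty refl | simp add: nrm)+)?)?))
  apply (subst C_pair_p2; ((rule ty refl, ((rule ty refl | simp add: nrm)+)?)?))
  apply (subst cidl; ((rule ty refl, ((rule ty refl | simp add: nrm)+)?)?))
  done

lemma aeq: "C_prodm D X J (C_diag D X) (cid J) = pr (p1 X J) (cid (CP X J))"
  apply (rule pair_ext2[where X=X and Y="CP X J"]; ((rule ty refl, ((rule ty refl | simp add: nrm)+)?)?)?)
   apply (subst pa1)
   apply (subst C_assoc[symmetric]; ((rule ty refl, ((rule ty refl | simp add: nrm)+)?)?))
   apply (subst prodm_p1; ((rule ty refl, ((rule ty refl | simp add: nrm)+)?)?))
   apply (subst C_assoc; ((rule ty refl, ((rule ty refl | simp add: nrm)+)?)?))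
   apply (subst diag_p1)
   apply (subst cidr; ((rule ty refl, ((rule ty refl | simp add: nrm)+)?)?))
  apply (subst pa2')
  apply (subst comp_pair; ((rule ty refl, ((rule ty refl | simp add: nrm)+)?)?))
  apply (subst C_assoc[symmetric]; ((rule ty refl, ((rule ty refl | simp add: nrm)+)?)?))
  apply (subst prodm_p1; ((rule ty refl, ((rule ty refl | simp add: nrm)+)?)?))
  apply (subst C_assoc; ((rule ty refl, ((rule ty refl | simp add: nrm)+)?)?))
  apply (subst diag_p2)
  apply (subst cidr; ((rule ty refl, ((rule ty refl | simp add: nrm)+)?)?))
  apply (subst prodm_p2; ((rule ty refl, ((rule ty refl | simp add: nrm)+)?)?))
  apply (subst cidr; ((rule ty refl, ((rule ty refl | simp add: nrm)+)?)?))
  apply (rule pair_id)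
  done

lemma beq: "pr (p1 X J) (kk X J) = C_diag D (CP X J)"
  apply (subst C_diag_def)
  apply (rule pair_ext2[where X="CP X J" and Y="CP X J"]; ((rule ty refl, ((rule ty refl | simp add: nrm)+)?)?)?)
   apply (subst pa4)
   apply (subst comp_pair; ((rule ty refl, ((rule ty refl | simp add: nrm)+)?)?))
   apply (subst C_pair_p1; ((rule ty refl, ((rule ty refl | simp add: nrm)+)?)?))
   apply (subst C_assoc[symmetric]; ((rule ty refl, ((rule ty refl | simp add: nrm)+)?)?))
   apply (subst C_pair_p2; ((rule ty refl, ((rule ty refl | simp add: nrm)+)?)?))
   apply (subst C_pair_p1; ((rule ty refl, ((rule ty refl | simp add: nrm)+)?)?))
   apply (rule pair_id)
  apply (subst pa3')
  apply (subst C_assoc[symmetric]; ((rule ty refl, ((rule ty refl | simp add: nrm)+)?)?))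
  apply (subst C_pair_p2; ((rule ty refl, ((rule ty refl | simp add: nrm)+)?)?))
  apply (subst C_pair_p2; ((rule ty refl, ((rule ty refl | simp add: nrm)+)?)?))
  done

lemma feq: "pr (p2 X J) (C_diag D (CP X J)) = pr (kk X J) (cid (CP X J))"
  apply (rule pair_ext2[where X="CP J (CP X J)" and Y="CP X J"]; ((rule ty refl, ((rule ty refl | simp add: nrm)+)?)?)?)
   apply (subst pa4)
   apply (subst comp_pair; ((rule ty refl, ((rule ty refl | simp add: nrm)+)?)?))
   apply (subst C_pair_p1; ((rule ty refl, ((rule ty refl | simp add: nrm)+)?)?))
   apply (subst C_assoc[symmetric]; ((rule ty refl, ((rule ty refl | simp add: nrm)+)?)?))
   apply (subst C_pair_p2; ((rule ty refl, ((rule ty refl | simp add: nrm)+)?)?))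
   apply (subst diag_p1)
   apply ((rule refl | simp only: nrm)?)
  apply (subst pa3')
  apply (subst C_assoc[symmetric]; ((rule ty refl, ((rule ty refl | simp add: nrm)+)?)?))
  apply (subst C_pair_p2; ((rule ty refl, ((rule ty refl | simp add: nrm)+)?)?))
  apply (subst diag_p2)
  apply ((rule refl | simp only: nrm)?)
  done

lemma CI_copy: "kk X J \<bullet> C_prodm D J (CP X J) (cid J) (C_diag D (CP X J))
   = C_prodm D X J (C_diag D X) (cid J) \<bullet> C_prodm D X (CP X J) (cid X) (kk X J) \<bullet> C_prodm D (CP X J) (CP X J) (kk X J) (cid (CP X J))"
  apply (subst pair_prodm; ((rule ty refl, ((rule ty refl | simp add: nrm)+)?)?))
  apply (subst cidr; ((rule ty refl, ((rule ty refl | simp add: nrm)+)?)?))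
  apply (subst cidl; ((rule ty refl, ((rule ty refl | simp add: nrm)+)?)?))
  apply (subst aeq)
  apply (subst pair_prodm; ((rule ty refl, ((rule ty refl | simp add: nrm)+)?)?))
  apply (subst cidr; ((rule ty refl, ((rule ty refl | simp add: nrm)+)?)?))
  apply (subst cidl; ((rule ty refl, ((rule ty refl | simp add: nrm)+)?)?))
  apply (subst beq)
  apply (subst (2) C_diag_def)
  apply (subst pair_prodm; ((rule ty refl, ((rule ty refl | simp add: nrm)+)?)?))
  apply (subst cidl; ((rule ty refl, ((rule ty refl | simp add: nrm)+)?)?))+
  apply (rule feq)
  done

lemma CI_p2: "C_diag D (CP X J) \<bullet> C_prodm D (CP X J) (CP X J) (p2 X J) (cid (CP X J)) = kk X J"
  apply (subst C_diag_def)
  apply (subst pair_prodm; ((rule ty refl, ((rule ty refl | simp add: nrm)+)?)?))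
  apply (subst cidl; ((rule ty refl, ((rule ty refl | simp add: nrm)+)?)?))+
  done

lemma CI_p12: "C_diag D (CP X J) \<bullet> C_prodm D (CP X J) (CP X J) (p1 X J) (p2 X J) = cid (CP X J)"
  apply (subst C_diag_def)
  apply (subst pair_prodm; ((rule ty refl, ((rule ty refl | simp add: nrm)+)?)?))
  apply (subst cidl; ((rule ty refl, ((rule ty refl | simp add: nrm)+)?)?))+
  apply (rule pair_id)
  done

lemma CI_w2: "C_prodm D X J (C_bang D X) (cid J) = p2 X J"
  apply (subst C_prodm_def)
  apply (subst pair_I2; ((rule ty refl, ((rule ty refl | simp add: nrm)+)?)?))
  apply (subst cidr; ((rule ty refl, ((rule ty refl | simp add: nrm)+)?)?))
  done

lemma CI_w1: "C_prodm D X J (cid X) (C_bang D J) = p1 X J"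
  apply (subst C_prodm_def)
  apply (subst pair_I1; ((rule ty refl, ((rule ty refl | simp add: nrm)+)?)?))
  apply (subst cidr; ((rule ty refl, ((rule ty refl | simp add: nrm)+)?)?))
  done

lemma CI_ww: "C_prodm D X J (C_bang D X) (C_bang D J) = C_bang D (CP X J)"
  by (rule C_bang_unique; ((rule ty refl, ((rule ty refl | simp add: nrm)+)?)?))

lemma CI_kp1: "kk X J \<bullet> p1 J (CP X J) = p2 X J" by (rule C_pair_p1; ((rule ty refl, ((rule ty refl | simp add: nrm)+)?)?))
lemma CI_kp2: "kk X J \<bullet> p2 J (CP X J) = cid (CP X J)" by (rule C_pair_p2; ((rule ty refl, ((rule ty refl | simp add: nrm)+)?)?))



lemma inv_unique: assumes a: "hom a A B" and b: "hom b B A" and b': "hom b' B A"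
  and l: "b ;; a = \<iota> B" and r: "a ;; b' = \<iota> A" shows "b = b'"
proof -
  have "b = b ;; \<iota> A" by (rule L_id_right[OF b, symmetric])
  also have "\<dots> = b ;; (a ;; b')" by (simp only: r)
  also have "\<dots> = (b ;; a) ;; b'" by (rule L_assoc[OF b a b', symmetric])
  also have "\<dots> = b'" by (simp only: l L_id_left[OF b'])
  finally show ?thesis .
qed

lemma cancel_r: assumes a: "hom a A B" and b: "hom b B A'" and t: "hom t A'' C"
  and e: "a ;; b = \<iota> A" and "A' = A" "A'' = A" shows "a ;; (b ;; t) = t"
  using assms L_assoc[OF a b, of t C] L_id_left[of t A C] by simp

lemma tc_r: assumes "hom r A B" "hom s B C" "hom r' A' B'" "hom s' B' C'" "hom t (C \<odot> C') E"
  shows "(r \<otimes> r') ;; ((s \<otimes> s') ;; t) = ((r ;; s) \<otimes> (r' ;; s')) ;; t"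
  using assms L_assoc[of "r \<otimes> r'" "A \<odot> A'" "B \<odot> B'" "s \<otimes> s'" "C \<odot> C'" t E]
    L_tensm_comp[of r A B s C r' A' B' s' C'] L_tensm_hom by metis

lemma FF: assumes f: "chom f X X'" and g: "chom g Y Y'"
  shows "FM f \<otimes> FM g = F_m D X Y ;; FM (C_prodm D X Y f g) ;; F_minv D X' Y'"
  apply (subst F_m_nat[symmetric]; ((rule ty ctyconv[OF f] ctyconv[OF g] refl, ((rule ty ctyconv[OF f] ctyconv[OF g] refl | simp add: nrm)+)?)?))
  apply (subst L_assoc; ((rule ty ctyconv[OF f] ctyconv[OF g] refl, ((rule ty ctyconv[OF f] ctyconv[OF g] refl | simp add: nrm)+)?)?))
  apply (subst F_m_minv)
  apply (subst L_id_right; ((rule ty ctyconv[OF f] ctyconv[OF g] refl, ((rule ty ctyconv[OF f] ctyconv[OF g] refl | simp add: nrm)+)?)?))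
  done

lemma mi_nat: assumes f: "chom f X X'" and g: "chom g Y Y'"
  shows "F_minv D X Y ;; (FM f \<otimes> FM g) = FM (C_prodm D X Y f g) ;; F_minv D X' Y'"
  apply (subst FF[OF f g])
  apply (subst L_assoc[symmetric]; ((rule ty ctyconv[OF f] ctyconv[OF g] refl, ((rule ty ctyconv[OF f] ctyconv[OF g] refl | simp add: nrm)+)?)?))+
  apply (subst F_minv_m)
  apply (subst L_id_left; ((rule ty ctyconv[OF f] ctyconv[OF g] refl, ((rule ty ctyconv[OF f] ctyconv[OF g] refl | simp add: nrm)+)?)?))
  done

lemma mi_unit_l: "F_minv D (C_term D) X = F_m1 D \<otimes> \<iota> (FO X)"
  apply (rule sym, rule inv_unique[where a="F_m D (C_term D) X"]; ((rule ty refl, ((rule ty refl | simp add: nrm)+)?)?))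
   apply (subst C_prod_unit_left, rule F_m_unit_left)
  apply (rule F_m_minv)
  done

lemma mi_unit_r: "F_minv D X (C_term D) = \<iota> (FO X) \<otimes> F_m1 D"
  apply (rule sym, rule inv_unique[where a="F_m D X (C_term D)"]; ((rule ty refl, ((rule ty refl | simp add: nrm)+)?)?))
   apply (subst C_prod_unit_right, rule F_m_unit_right)
  apply (rule F_m_minv)
  done

lemma mi_assoc: "F_minv D (CP X Y) Z ;; (F_minv D X Y \<otimes> \<iota> (FO Z)) = F_minv D X (CP Y Z) ;; (\<iota> (FO X) \<otimes> F_minv D Y Z)"
  apply (rule inv_unique[where a="(F_m D X Y \<otimes> \<iota> (FO Z)) ;; F_m D (CP X Y) Z"]; ((rule ty refl, ((rule ty refl | simp add: nrm)+)?)?))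
      apply (subst L_assoc; ((rule ty refl, ((rule ty refl | simp add: nrm)+)?)?))+
      apply (subst tc_r; ((rule ty refl, ((rule ty refl | simp add: nrm)+)?)?))
      apply (subst F_minv_m)
      apply (subst L_id_left; ((rule ty refl, ((rule ty refl | simp add: nrm)+)?)?))
      apply (subst L_tensm_id)
      apply (subst L_id_left; ((rule ty refl, ((rule ty refl | simp add: nrm)+)?)?))
      apply (subst F_minv_m)
      apply ((rule refl | simp only: nrm)?)
      apply (subst F_m_assoc)
      apply (subst L_assoc; ((rule ty refl, ((rule ty refl | simp add: nrm)+)?)?))+
      apply (subst cancel_r[where b="F_minv D X (CP Y Z)"]; ((rule ty refl, ((rule ty refl | simp add: nrm)+)?)?))
      apply (rule F_m_minv)
      apply (subst L_tensm_comp[symmetric]; ((rule ty refl, ((rule ty refl | simp add: nrm)+)?)?))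
      apply (subst F_m_minv)
      apply (subst L_id_left; ((rule ty refl, ((rule ty refl | simp add: nrm)+)?)?))
      apply (subst L_tensm_id)
      apply ((rule refl | simp only: nrm)?)
  done

lemma mi_sym: "F_minv D X Y ;; L_sym D (FO X) (FO Y) = FM (C_swap D X Y) ;; F_minv D Y X"
proof -
  have "F_minv D X Y ;; L_sym D (FO X) (FO Y) = F_minv D X Y ;; L_sym D (FO X) (FO Y) ;; (F_m D Y X ;; F_minv D Y X)"
    by (subst F_m_minv, subst L_id_right; ((rule ty refl, ((rule ty refl | simp add: nrm)+)?)?))
  also have "\<dots> = F_minv D X Y ;; (L_sym D (FO X) (FO Y) ;; F_m D Y X) ;; F_minv D Y X"
    by (subst L_assoc[symmetric]; ((rule ty refl, ((rule ty refl | simp add: nrm)+)?)?)) (subst L_assoc; ((rule ty refl, ((rule ty refl | simp add: nrm)+)?)?))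
  also have "\<dots> = F_minv D X Y ;; (F_m D X Y ;; FM (C_swap D X Y)) ;; F_minv D Y X"
    by (subst F_m_sym; ((rule ty refl, ((rule ty refl | simp add: nrm)+)?)?))
  also have "\<dots> = FM (C_swap D X Y) ;; F_minv D Y X"
    by (subst L_assoc[symmetric]; ((rule ty refl, ((rule ty refl | simp add: nrm)+)?)?)) (subst F_minv_m, subst L_id_left; ((rule ty refl, ((rule ty refl | simp add: nrm)+)?)?))
  finally show ?thesis .
qed



abbreviation lw where "lw X \<equiv> ls_w D X"
abbreviation lcp where "lcp X \<equiv> ls_c D X"
abbreviation mm where "mm X Y \<equiv> F_m D X Y"
abbreviation mmi where "mmi X Y \<equiv> F_minv D X Y"
abbreviation sg where "sg A B \<equiv> L_sym D A B"

lemma Lidl: "hom r A B \<Longrightarrow> A' = A \<Longrightarrow> \<iota> A' ;; r = r" using L_id_left by blast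
lemma Lidr: "hom r A B \<Longrightarrow> B' = B \<Longrightarrow> r ;; \<iota> B' = r" using L_id_right by blast

lemma ts1: assumes a: "hom a A B" and b: "hom b B C" and c: "hom c A' B'"
  shows "(a ;; b) \<otimes> c = (a \<otimes> c) ;; (b \<otimes> \<iota> B')"
  by (subst L_tensm_comp[symmetric]; ((rule ty tyconv[OF a] tyconv[OF b] tyconv[OF c] refl, ((rule ty tyconv[OF a] tyconv[OF b] tyconv[OF c] refl | simp add: nrm)+)?)?)) (subst Lidr; ((rule ty tyconv[OF a] tyconv[OF b] tyconv[OF c] refl, ((rule ty tyconv[OF a] tyconv[OF b] tyconv[OF c] refl | simp add: nrm)+)?)?))
lemma ts1': assumes a: "hom a A B" and b: "hom b B C" and c: "hom c A' B'"
  shows "(a ;; b) \<otimes> c = (a \<otimes> \<iota> A') ;; (b \<otimes> c)"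
  by (subst L_tensm_comp[symmetric]; ((rule ty tyconv[OF a] tyconv[OF b] tyconv[OF c] refl, ((rule ty tyconv[OF a] tyconv[OF b] tyconv[OF c] refl | simp add: nrm)+)?)?)) (subst Lidl; ((rule ty tyconv[OF a] tyconv[OF b] tyconv[OF c] refl, ((rule ty tyconv[OF a] tyconv[OF b] tyconv[OF c] refl | simp add: nrm)+)?)?))
lemma ts2: assumes a: "hom a A B" and b: "hom b B C" and c: "hom c A' B'"
  shows "c \<otimes> (a ;; b) = (c \<otimes> a) ;; (\<iota> B' \<otimes> b)"
  by (subst L_tensm_comp[symmetric]; ((rule ty tyconv[OF a] tyconv[OF b] tyconv[OF c] refl, ((rule ty tyconv[OF a] tyconv[OF b] tyconv[OF c] refl | simp add: nrm)+)?)?)) (subst Lidr; ((rule ty tyconv[OF a] tyconv[OF b] tyconv[OF c] refl, ((rule ty tyconv[OF a] tyconv[OF b] tyconv[OF c] refl | simp add: nrm)+)?)?))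
lemma ts2': assumes a: "hom a A B" and b: "hom b B C" and c: "hom c A' B'"
  shows "c \<otimes> (a ;; b) = (\<iota> A' \<otimes> a) ;; (c \<otimes> b)"
  by (subst L_tensm_comp[symmetric]; ((rule ty tyconv[OF a] tyconv[OF b] tyconv[OF c] refl, ((rule ty tyconv[OF a] tyconv[OF b] tyconv[OF c] refl | simp add: nrm)+)?)?)) (subst Lidl; ((rule ty tyconv[OF a] tyconv[OF b] tyconv[OF c] refl, ((rule ty tyconv[OF a] tyconv[OF b] tyconv[OF c] refl | simp add: nrm)+)?)?))

lemma W1: assumes f: "chom f X Y" shows "FM f ;; lw Y = lw X"
  unfolding ls_w_def
  apply (subst L_assoc[symmetric]; ((rule ty ctyconv[OF f] refl, ((rule ty ctyconv[OF f] refl | simp add: nrm)+)?)?))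
  apply (subst F_comp[symmetric]; ((rule ty ctyconv[OF f] refl, ((rule ty ctyconv[OF f] refl | simp add: nrm)+)?)?))
  apply (subst bang_comp[OF f])
  apply ((rule refl | simp only: nrm)?)
  done

lemma W2: "mmi X J ;; (lw X \<otimes> \<iota> (FO J)) = FM (p2 X J)"
proof -
  have "lw X \<otimes> \<iota> (FO J) = (FM (C_bang D X) \<otimes> FM (cid J)) ;; (F_m1inv D \<otimes> \<iota> (FO J))"
    unfolding ls_w_def by (subst ts1; ((rule ty refl, ((rule ty refl | simp add: nrm)+)?)?)) (subst F_id, rule refl)
  hence "mmi X J ;; (lw X \<otimes> \<iota> (FO J)) = (mmi X J ;; (FM (C_bang D X) \<otimes> FM (cid J))) ;; (F_m1inv D \<otimes> \<iota> (FO J))"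
    by (simp only:) (subst L_assoc; ((rule ty refl, ((rule ty refl | simp add: nrm)+)?)?))
  also have "\<dots> = FM (p2 X J) ;; (mmi (C_term D) J ;; (F_m1inv D \<otimes> \<iota> (FO J)))"
    by (subst mi_nat; ((rule ty refl, ((rule ty refl | simp add: nrm)+)?)?)) (subst CI_w2, subst L_assoc; ((rule ty refl, ((rule ty refl | simp add: nrm)+)?)?))
  also have "\<dots> = FM (p2 X J)"
    apply (subst mi_unit_l)
    apply (subst L_tensm_comp[symmetric]; ((rule ty refl, ((rule ty refl | simp add: nrm)+)?)?))
    apply (subst F_m1_m1inv)
    apply (subst Lidl; ((rule ty refl, ((rule ty refl | simp add: nrm)+)?)?))
    apply (subst L_tensm_id)
    apply (subst Lidr; ((rule ty refl, ((rule ty refl | simp add: nrm)+)?)?))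
    done
  finally show ?thesis .
qed

lemma W3: "mmi X J ;; (\<iota> (FO X) \<otimes> lw J) = FM (p1 X J)"
proof -
  have "\<iota> (FO X) \<otimes> lw J = (FM (cid X) \<otimes> FM (C_bang D J)) ;; (\<iota> (FO X) \<otimes> F_m1inv D)"
    unfolding ls_w_def by (subst ts2; ((rule ty refl, ((rule ty refl | simp add: nrm)+)?)?)) (subst F_id, rule refl)
  hence "mmi X J ;; (\<iota> (FO X) \<otimes> lw J) = (mmi X J ;; (FM (cid X) \<otimes> FM (C_bang D J))) ;; (\<iota> (FO X) \<otimes> F_m1inv D)"
    by (simp only:) (subst L_assoc; ((rule ty refl, ((rule ty refl | simp add: nrm)+)?)?))
  also have "\<dots> = FM (p1 X J) ;; (mmi X (C_term D) ;; (\<iota> (FO X) \<otimes> F_m1inv D))"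
    by (subst mi_nat; ((rule ty refl, ((rule ty refl | simp add: nrm)+)?)?)) (subst CI_w1, subst L_assoc; ((rule ty refl, ((rule ty refl | simp add: nrm)+)?)?))
  also have "\<dots> = FM (p1 X J)"
    apply (subst mi_unit_r)
    apply (subst L_tensm_comp[symmetric]; ((rule ty refl, ((rule ty refl | simp add: nrm)+)?)?))
    apply (subst F_m1_m1inv)
    apply (subst Lidl; ((rule ty refl, ((rule ty refl | simp add: nrm)+)?)?))
    apply (subst L_tensm_id)
    apply (subst Lidr; ((rule ty refl, ((rule ty refl | simp add: nrm)+)?)?))
    done
  finally show ?thesis .
qed

lemma cw1: "lcp X ;; (lw X \<otimes> \<iota> (FO X)) = \<iota> (FO X)"
  unfolding ls_c_def
  apply (subst L_assoc; ((rule ty refl, ((rule ty refl | simp add: nrm)+)?)?))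
  apply (subst W2)
  apply (subst F_comp[symmetric]; ((rule ty refl, ((rule ty refl | simp add: nrm)+)?)?))
  apply (subst diag_p2)
  apply (rule F_id)
  done

lemma cw2: "lcp X ;; (\<iota> (FO X) \<otimes> lw X) = \<iota> (FO X)"
  unfolding ls_c_def
  apply (subst L_assoc; ((rule ty refl, ((rule ty refl | simp add: nrm)+)?)?))
  apply (subst W3)
  apply (subst F_comp[symmetric]; ((rule ty refl, ((rule ty refl | simp add: nrm)+)?)?))
  apply (subst diag_p1)
  apply (rule F_id)
  done

lemma mw: "mm X J ;; lw (CP X J) = lw X \<otimes> lw J"
proof -
  have "lw (CP X J) = FM (p1 X J) ;; lw X" by (rule W1[symmetric]; ((rule ty refl, ((rule ty refl | simp add: nrm)+)?)?))
  hence "mm X J ;; lw (CP X J) = (mm X J ;; FM (p1 X J)) ;; lw X"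
    by (simp only:) (subst L_assoc; ((rule ty refl, ((rule ty refl | simp add: nrm)+)?)?))
  also have "mm X J ;; FM (p1 X J) = \<iota> (FO X) \<otimes> lw J"
    by (subst W3[symmetric], subst L_assoc[symmetric]; ((rule ty refl, ((rule ty refl | simp add: nrm)+)?)?)) (subst F_m_minv, subst Lidl; ((rule ty refl, ((rule ty refl | simp add: nrm)+)?)?))
  also have "(\<iota> (FO X) \<otimes> lw J) ;; lw X = lw X \<otimes> lw J"
    apply (subst L_tensm_unit_right[symmetric, of "lw X"]; ((rule ty refl, ((rule ty refl | simp add: nrm)+)?)?))
    apply (subst L_tensm_comp[symmetric]; ((rule ty refl, ((rule ty refl | simp add: nrm)+)?)?))
    apply (subst Lidl Lidr; ((rule ty refl, ((rule ty refl | simp add: nrm)+)?)?))+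
    done
  finally show ?thesis .
qed



lemma al: assumes e: "a ;; b = e" and t: "hom t A B" and a: "hom a B' C" and b: "hom b C' E" and "B' = B" "C' = C"
  shows "t ;; a ;; b = t ;; e"
  using assms L_assoc[OF t, of a C b E] by simp

lemma al3: assumes e: "a ;; b ;; c = e" and t: "hom t A B" and a: "hom a B' C" and b: "hom b C' E" and c: "hom c E' G"
  and "B' = B" "C' = C" "E' = E"
  shows "t ;; a ;; b ;; c = t ;; e"
proof -
  have "t ;; a ;; b ;; c = t ;; (a ;; b) ;; c" using assms L_assoc[OF t, of a C b E] by simp
  also have "\<dots> = t ;; (a ;; b ;; c)" using assms L_assoc[of t A B "a ;; b" E c G] L_comp_hom by metis
  finally show ?thesis using e by simp
qed

definition KK where "KK X J = (\<iota> (FO X) \<otimes> lcp J) ;; (sg (FO X) (FO J) \<otimes> \<iota> (FO J)) ;; (\<iota> (FO J) \<otimes> mm X J)"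

lemma Ke1: "\<iota> (FO X) \<otimes> lcp J = mm X J ;; FM (C_prodm D X J (cid X) (C_diag D J)) ;; (mmi (CP X J) J ;; (mmi X J \<otimes> \<iota> (FO J)))"
proof -
  have "\<iota> (FO X) \<otimes> lcp J = (FM (cid X) \<otimes> FM (C_diag D J)) ;; (\<iota> (FO X) \<otimes> mmi J J)"
    unfolding ls_c_def by (subst ts2; ((rule ty refl, ((rule ty refl | simp add: nrm)+)?)?)) (subst F_id, rule refl)
  also have "\<dots> = mm X J ;; FM (C_prodm D X J (cid X) (C_diag D J)) ;; (mmi X (CP J J) ;; (\<iota> (FO X) \<otimes> mmi J J))"
    by (subst FF; ((rule ty refl, ((rule ty refl | simp add: nrm)+)?)?)) (subst L_assoc; ((rule ty refl, ((rule ty refl | simp add: nrm)+)?)?))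
  also have "\<dots> = mm X J ;; FM (C_prodm D X J (cid X) (C_diag D J)) ;; (mmi (CP X J) J ;; (mmi X J \<otimes> \<iota> (FO J)))"
    by (subst mi_assoc, rule refl)
  finally show ?thesis .
qed

lemma Ke2: "(mmi X J \<otimes> \<iota> (FO J)) ;; (sg (FO X) (FO J) \<otimes> \<iota> (FO J)) = (FM (C_swap D X J) \<otimes> FM (cid J)) ;; (mmi J X \<otimes> \<iota> (FO J))"
  apply (subst F_id)
  apply (subst L_tensm_comp[symmetric]; ((rule ty refl, ((rule ty refl | simp add: nrm)+)?)?))
  apply (subst mi_sym)
  apply (subst Lidl; ((rule ty refl, ((rule ty refl | simp add: nrm)+)?)?))
  apply (subst ts1; ((rule ty refl, ((rule ty refl | simp add: nrm)+)?)?))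
  done

lemma Ke3: "mmi (CP X J) J ;; (FM (C_swap D X J) \<otimes> FM (cid J)) = FM (C_prodm D (CP X J) J (C_swap D X J) (cid J)) ;; mmi (CP J X) J"
  by (rule mi_nat; ((rule ty refl, ((rule ty refl | simp add: nrm)+)?)?))

lemma Ke4: "mmi (CP J X) J ;; (mmi J X \<otimes> \<iota> (FO J)) ;; (\<iota> (FO J) \<otimes> mm X J) = mmi J (CP X J)"
  apply (subst mi_assoc)
  apply (subst L_assoc; ((rule ty refl, ((rule ty refl | simp add: nrm)+)?)?))
  apply (subst L_tensm_comp[symmetric]; ((rule ty refl, ((rule ty refl | simp add: nrm)+)?)?))
  apply (subst F_minv_m)
  apply (subst Lidl; ((rule ty refl, ((rule ty refl | simp add: nrm)+)?)?))
  apply (subst L_tensm_id)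
  apply (subst Lidr; ((rule ty refl, ((rule ty refl | simp add: nrm)+)?)?))
  done

lemma Kform: "KK X J = mm X J ;; FM (kk X J) ;; mmi J (CP X J)"
  unfolding KK_def
  apply (subst Ke1)
  apply (subst L_assoc[symmetric]; ((rule ty refl, ((rule ty refl | simp add: nrm)+)?)?))+
  apply (subst al[OF Ke2]; ((rule ty refl, ((rule ty refl | simp add: nrm)+)?)?))
  apply (subst L_assoc[symmetric]; ((rule ty refl, ((rule ty refl | simp add: nrm)+)?)?))+
  apply (subst al[OF Ke3]; ((rule ty refl, ((rule ty refl | simp add: nrm)+)?)?))
  apply (subst L_assoc[symmetric]; ((rule ty refl, ((rule ty refl | simp add: nrm)+)?)?))+
  apply (subst al3[OF Ke4]; ((rule ty refl, ((rule ty refl | simp add: nrm)+)?)?))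
  apply (subst al[OF F_comp[symmetric]]; ((rule ty refl, ((rule ty refl | simp add: nrm)+)?)?))
  apply (subst CI_K)
  apply ((rule refl | simp only: nrm)?)
  done

lemma ty_KK: "P = FO X \<odot> FO J \<Longrightarrow> Q = FO J \<odot> FO (CP X J) \<Longrightarrow> hom (KK X J) P Q"
  unfolding KK_def by (rule ty refl | simp add: nrm)+

declare ty_KK[ty]



lemma Fid_t1: "\<iota> (FO X) \<otimes> FM f = FM (cid X) \<otimes> FM f" by (simp only: F_id)
lemma Fid_t2: "FM f \<otimes> \<iota> (FO X) = FM f \<otimes> FM (cid X)" by (simp only: F_id)

lemma canc1: "(\<iota> A \<otimes> mmi X J) ;; (\<iota> A \<otimes> mm X J) = \<iota> (A \<odot> FO (CP X J))"
  apply (subst L_tensm_comp[symmetric]; ((rule ty refl, ((rule ty refl | simp add: nrm)+)?)?))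
  apply (subst F_minv_m)
  apply (subst Lidl; ((rule ty refl, ((rule ty refl | simp add: nrm)+)?)?))
  apply (subst L_tensm_id)
  apply ((rule refl | simp only: nrm)?)
  done

lemma canc2: "(mmi X J \<otimes> \<iota> A) ;; (mm X J \<otimes> \<iota> A) = \<iota> (FO (CP X J) \<odot> A)"
  apply (subst L_tensm_comp[symmetric]; ((rule ty refl, ((rule ty refl | simp add: nrm)+)?)?))
  apply (subst F_minv_m)
  apply (subst Lidl; ((rule ty refl, ((rule ty refl | simp add: nrm)+)?)?))
  apply (subst L_tensm_id)
  apply ((rule refl | simp only: nrm)?)
  done

lemma Kc_L: "KK X J ;; (\<iota> (FO J) \<otimes> lcp (CP X J)) =
  mm X J ;; FM (kk X J \<bullet> C_prodm D J (CP X J) (cid J) (C_diag D (CP X J))) ;; mmi J (CP (CP X J) (CP X J)) ;; (\<iota> (FO J) \<otimes> mmi (CP X J) (CP X J))"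
  apply (subst Kform)
  apply (subst ls_c_def)
  apply (subst ts2'; ((rule ty refl, ((rule ty refl | simp add: nrm)+)?)?))
  apply (subst Fid_t1)
  apply (subst L_assoc[symmetric]; ((rule ty refl, ((rule ty refl | simp add: nrm)+)?)?))+
  apply (subst al[OF mi_nat]; ((rule ty refl, ((rule ty refl | simp add: nrm)+)?)?))
  apply (subst L_assoc[symmetric]; ((rule ty refl, ((rule ty refl | simp add: nrm)+)?)?))+
  apply (subst al[OF F_comp[symmetric]]; ((rule ty refl, ((rule ty refl | simp add: nrm)+)?)?))
  apply ((rule refl | simp only: nrm)?)
  done

lemma Kc_R: "(lcp X \<otimes> \<iota> (FO J)) ;; (\<iota> (FO X) \<otimes> KK X J) ;; (KK X J \<otimes> \<iota> (FO (CP X J))) =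
  mm X J ;; FM (C_prodm D X J (C_diag D X) (cid J) \<bullet> C_prodm D X (CP X J) (cid X) (kk X J) \<bullet> C_prodm D (CP X J) (CP X J) (kk X J) (cid (CP X J)))
     ;; mmi J (CP (CP X J) (CP X J)) ;; (\<iota> (FO J) \<otimes> mmi (CP X J) (CP X J))"
  apply (subst Kform)+
  apply (subst ls_c_def)
  apply (subst ts1; ((rule ty refl, ((rule ty refl | simp add: nrm)+)?)?))
  apply (subst Fid_t2)
  apply (subst FF; ((rule ty refl, ((rule ty refl | simp add: nrm)+)?)?))
  apply (subst ts2'; ((rule ty refl, ((rule ty refl | simp add: nrm)+)?)?))+
  apply (subst ts1; ((rule ty refl, ((rule ty refl | simp add: nrm)+)?)?))+
  apply (subst L_assoc[symmetric]; ((rule ty refl, ((rule ty refl | simp add: nrm)+)?)?))+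
  apply (subst al[OF mi_assoc]; ((rule ty refl, ((rule ty refl | simp add: nrm)+)?)?))
  apply (subst L_assoc[symmetric]; ((rule ty refl, ((rule ty refl | simp add: nrm)+)?)?))+
  apply (subst al[OF canc1]; ((rule ty refl, ((rule ty refl | simp add: nrm)+)?)?))
  apply (subst Lidr; ((rule ty refl, ((rule ty refl | simp add: nrm)+)?)?))
  apply (subst Fid_t1)
  apply (subst al[OF mi_nat]; ((rule ty refl, ((rule ty refl | simp add: nrm)+)?)?))
  apply (subst L_assoc[symmetric]; ((rule ty refl, ((rule ty refl | simp add: nrm)+)?)?))+
  apply (subst al[OF mi_assoc[symmetric]]; ((rule ty refl, ((rule ty refl | simp add: nrm)+)?)?))
  apply (subst L_assoc[symmetric]; ((rule ty refl, ((rule ty refl | simp add: nrm)+)?)?))+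
  apply (subst al[OF canc2]; ((rule ty refl, ((rule ty refl | simp add: nrm)+)?)?))
  apply (subst Lidr; ((rule ty refl, ((rule ty refl | simp add: nrm)+)?)?))
  apply (subst Fid_t2)
  apply (subst al[OF mi_nat]; ((rule ty refl, ((rule ty refl | simp add: nrm)+)?)?))
  apply (subst L_assoc[symmetric]; ((rule ty refl, ((rule ty refl | simp add: nrm)+)?)?))+
  apply (subst al[OF mi_assoc]; ((rule ty refl, ((rule ty refl | simp add: nrm)+)?)?))
  apply (subst L_assoc[symmetric]; ((rule ty refl, ((rule ty refl | simp add: nrm)+)?)?))+
  apply (subst al[OF F_comp[symmetric]]; ((rule ty refl, ((rule ty refl | simp add: nrm)+)?)?))+
  apply ((rule refl | simp only: nrm)?)
  done

lemma Kcopy: "KK X J ;; (\<iota> (FO J) \<otimes> lcp (CP X J)) = (lcp X \<otimes> \<iota> (FO J)) ;; (\<iota> (FO X) \<otimes> KK X J) ;; (KK X J \<otimes> \<iota> (FO (CP X J)))"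
  by (subst Kc_L, subst Kc_R, subst CI_copy, rule refl)



abbreviation Sg where "Sg X J A u \<equiv>
      ((\<iota> (FO X) \<otimes> lcp J) \<otimes> \<iota> A) ;; (sg (FO X) (FO J) \<otimes> \<iota> (FO J \<odot> A)) ;;
      (\<iota> (FO J) \<otimes> ((mm X J \<otimes> \<iota> A) ;; u))"

lemma Sform: assumes u: "hom u (FO (CP X J) \<odot> A) B"
  shows "Sg X J A u = (KK X J \<otimes> \<iota> A) ;; (\<iota> (FO J) \<otimes> u)"
  unfolding KK_def
  apply (subst ts1'; ((rule ty tyconv[OF u] refl, ((rule ty tyconv[OF u] refl | simp add: nrm)+)?)?))+
  apply (subst ts2'; ((rule ty tyconv[OF u] refl, ((rule ty tyconv[OF u] refl | simp add: nrm)+)?)?))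
  apply (subst L_tensm_assoc[of "sg (FO X) (FO J)"]; ((rule ty tyconv[OF u] refl, ((rule ty tyconv[OF u] refl | simp add: nrm)+)?)?))
  apply (subst L_tensm_assoc[of "\<iota> (FO J)" _ _ "mm X J"]; ((rule ty tyconv[OF u] refl, ((rule ty tyconv[OF u] refl | simp add: nrm)+)?)?))
  apply (subst L_tensm_id)
  apply (subst L_assoc[symmetric]; ((rule ty tyconv[OF u] refl, ((rule ty tyconv[OF u] refl | simp add: nrm)+)?)?))+
  apply ((rule refl | simp only: nrm)?)
  done

lemma Kw: "KK X J ;; (\<iota> (FO J) \<otimes> lw (CP X J)) = lw X \<otimes> \<iota> (FO J)"
  apply (subst Kform)
  apply (subst al[OF W3]; ((rule ty refl, ((rule ty refl | simp add: nrm)+)?)?))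
  apply (subst al[OF F_comp[symmetric]]; ((rule ty refl, ((rule ty refl | simp add: nrm)+)?)?))
  apply (subst CI_kp1)
  apply (subst W2[symmetric])
  apply (subst L_assoc[symmetric]; ((rule ty refl, ((rule ty refl | simp add: nrm)+)?)?))
  apply (subst F_m_minv)
  apply (subst Lidl; ((rule ty refl, ((rule ty refl | simp add: nrm)+)?)?))
  done

lemma conj2: "Sg X J A (lw (CP X J) \<otimes> \<iota> A) = lw X \<otimes> \<iota> (FO J \<odot> A)"
  apply (subst Sform; ((rule ty refl, ((rule ty refl | simp add: nrm)+)?)?))
  apply (subst L_tensm_assoc[symmetric]; ((rule ty refl, ((rule ty refl | simp add: nrm)+)?)?))
  apply (subst L_tensm_comp[symmetric]; ((rule ty refl, ((rule ty refl | simp add: nrm)+)?)?))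
  apply (subst Kw)
  apply (subst Lidl; ((rule ty refl, ((rule ty refl | simp add: nrm)+)?)?))
  apply (subst L_tensm_assoc; ((rule ty refl, ((rule ty refl | simp add: nrm)+)?)?))
  apply (subst L_tensm_id)
  apply ((rule refl | simp only: nrm)?)
  done

lemma ic: assumes u: "hom u A' B" and k: "hom k P Q"
  shows "(\<iota> P \<otimes> u) ;; (k \<otimes> \<iota> B) = (k \<otimes> \<iota> A') ;; (\<iota> Q \<otimes> u)"
  apply (subst L_tensm_comp[symmetric]; ((rule ty tyconv[OF u] tyconv[OF k] refl, ((rule ty tyconv[OF u] tyconv[OF k] refl | simp add: nrm)+)?)?))+
  apply (subst Lidl Lidr; ((rule ty tyconv[OF u] tyconv[OF k] refl, ((rule ty tyconv[OF u] tyconv[OF k] refl | simp add: nrm)+)?)?))+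
  apply ((rule refl | simp only: nrm)?)
  done

abbreviation NN where "NN X J A u v \<equiv> (lcp X \<otimes> \<iota> (FO J \<odot> A)) ;; (\<iota> (FO X) \<otimes> (KK X J \<otimes> \<iota> A)) ;; (KK X J \<otimes> \<iota> (FO (CP X J) \<odot> A))
   ;; (\<iota> (FO J \<odot> FO (CP X J)) \<otimes> u) ;; (\<iota> (FO J) \<otimes> v)"

lemma conj3R: assumes u: "hom u (FO (CP X J) \<odot> A) B" and v: "hom v (FO (CP X J) \<odot> B) C"
  shows "(lcp X \<otimes> \<iota> (FO J \<odot> A)) ;; (FM (cid X) \<otimes> ((KK X J \<otimes> \<iota> A) ;; (\<iota> (FO J) \<otimes> u))) ;; ((KK X J \<otimes> \<iota> B) ;; (\<iota> (FO J) \<otimes> v))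
    = NN X J A u v"
  apply (subst F_id)
  apply (subst ts2'[of "KK X J \<otimes> \<iota> A"]; ((rule ty tyconv[OF u] tyconv[OF v] refl, ((rule ty tyconv[OF u] tyconv[OF v] refl | simp add: nrm)+)?)?))
  apply (subst L_assoc[symmetric]; ((rule ty tyconv[OF u] tyconv[OF v] refl, ((rule ty tyconv[OF u] tyconv[OF v] refl | simp add: nrm)+)?)?))+
  apply (subst L_tensm_assoc[symmetric, of "\<iota> (FO X)" _ _ "\<iota> (FO J)" _ _ u]; ((rule ty tyconv[OF u] tyconv[OF v] refl, ((rule ty tyconv[OF u] tyconv[OF v] refl | simp add: nrm)+)?)?))
  apply (subst L_tensm_id)
  apply (subst al[OF ic]; ((rule ty tyconv[OF u] tyconv[OF v] refl, ((rule ty tyconv[OF u] tyconv[OF v] refl | simp add: nrm)+)?)?))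
  apply (subst L_assoc[symmetric]; ((rule ty tyconv[OF u] tyconv[OF v] refl, ((rule ty tyconv[OF u] tyconv[OF v] refl | simp add: nrm)+)?)?))+
  apply ((rule refl | simp only: nrm)?)
  done

lemma conj3L: assumes u: "hom u (FO (CP X J) \<odot> A) B" and v: "hom v (FO (CP X J) \<odot> B) C"
  shows "(KK X J \<otimes> \<iota> A) ;; (\<iota> (FO J) \<otimes> ((lcp (CP X J) \<otimes> \<iota> A) ;; (FM (cid (CP X J)) \<otimes> u) ;; v)) = NN X J A u v"
  apply (subst F_id)
  apply (subst ts2'; ((rule ty tyconv[OF u] tyconv[OF v] refl, ((rule ty tyconv[OF u] tyconv[OF v] refl | simp add: nrm)+)?)?))+
  apply (subst L_assoc[symmetric]; ((rule ty tyconv[OF u] tyconv[OF v] refl, ((rule ty tyconv[OF u] tyconv[OF v] refl | simp add: nrm)+)?)?))+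
  apply (subst L_tensm_assoc[symmetric, of "\<iota> (FO J)" _ _ "lcp (CP X J)"]; ((rule ty tyconv[OF u] tyconv[OF v] refl, ((rule ty tyconv[OF u] tyconv[OF v] refl | simp add: nrm)+)?)?))
  apply (subst L_tensm_comp[symmetric, of "KK X J"]; ((rule ty tyconv[OF u] tyconv[OF v] refl, ((rule ty tyconv[OF u] tyconv[OF v] refl | simp add: nrm)+)?)?))
  apply (subst Kcopy)
  apply (subst Lidl; ((rule ty tyconv[OF u] tyconv[OF v] refl, ((rule ty tyconv[OF u] tyconv[OF v] refl | simp add: nrm)+)?)?))
  apply (subst ts1'; ((rule ty tyconv[OF u] tyconv[OF v] refl, ((rule ty tyconv[OF u] tyconv[OF v] refl | simp add: nrm)+)?)?))+
  apply (subst L_tensm_assoc[of "lcp X"]; ((rule ty tyconv[OF u] tyconv[OF v] refl, ((rule ty tyconv[OF u] tyconv[OF v] refl | simp add: nrm)+)?)?))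
  apply (subst L_tensm_assoc[of "\<iota> (FO X)"]; ((rule ty tyconv[OF u] tyconv[OF v] refl, ((rule ty tyconv[OF u] tyconv[OF v] refl | simp add: nrm)+)?)?))
  apply (subst L_tensm_assoc[of "KK X J"]; ((rule ty tyconv[OF u] tyconv[OF v] refl, ((rule ty tyconv[OF u] tyconv[OF v] refl | simp add: nrm)+)?)?))
  apply (subst L_tensm_assoc[symmetric, of "\<iota> (FO J)" _ _ "\<iota> (FO (CP X J))" _ _ u]; ((rule ty tyconv[OF u] tyconv[OF v] refl, ((rule ty tyconv[OF u] tyconv[OF v] refl | simp add: nrm)+)?)?))
  apply (subst L_tensm_id)+
  apply ((rule refl | simp only: nrm)?)
  done



lemma CI_dnat: assumes f: "chom f X Y" shows "C_diag D X \<bullet> C_prodm D X X f f = f \<bullet> C_diag D Y"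
  unfolding C_diag_def
  apply (subst pair_prodm; ((rule ty ctyconv[OF f] refl, ((rule ty ctyconv[OF f] refl | simp add: nrm)+)?)?))
  apply (subst comp_pair; ((rule ty ctyconv[OF f] refl, ((rule ty ctyconv[OF f] refl | simp add: nrm)+)?)?))
  apply (subst cidl cidr; ((rule ty ctyconv[OF f] refl, ((rule ty ctyconv[OF f] refl | simp add: nrm)+)?)?))+
  done

lemma cF: assumes f: "chom f Z X" and g: "chom g Z Y"
  shows "lcp Z ;; (FM f \<otimes> FM g) = FM (C_diag D Z \<bullet> C_prodm D Z Z f g) ;; mmi X Y"
  unfolding ls_c_def
  apply (subst L_assoc; ((rule ty ctyconv[OF f] ctyconv[OF g] refl, ((rule ty ctyconv[OF f] ctyconv[OF g] refl | simp add: nrm)+)?)?))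
  apply (subst mi_nat; ((rule ty ctyconv[OF f] ctyconv[OF g] refl, ((rule ty ctyconv[OF f] ctyconv[OF g] refl | simp add: nrm)+)?)?))
  apply (subst L_assoc[symmetric]; ((rule ty ctyconv[OF f] ctyconv[OF g] refl, ((rule ty ctyconv[OF f] ctyconv[OF g] refl | simp add: nrm)+)?)?))
  apply (subst F_comp[symmetric]; ((rule ty ctyconv[OF f] ctyconv[OF g] refl, ((rule ty ctyconv[OF f] ctyconv[OF g] refl | simp add: nrm)+)?)?))
  apply ((rule refl | simp only: nrm)?)
  done

lemma cnat: assumes f: "chom f X Y" shows "lcp X ;; (FM f \<otimes> FM f) = FM f ;; lcp Y"
  apply (subst cF; ((rule ty ctyconv[OF f] refl, ((rule ty ctyconv[OF f] refl | simp add: nrm)+)?)?))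
  unfolding ls_c_def
  apply (subst L_assoc[symmetric]; ((rule ty ctyconv[OF f] refl, ((rule ty ctyconv[OF f] refl | simp add: nrm)+)?)?))
  apply (subst F_comp[symmetric]; ((rule ty ctyconv[OF f] refl, ((rule ty ctyconv[OF f] refl | simp add: nrm)+)?)?))
  apply (subst CI_dnat[OF f])
  apply ((rule refl | simp only: nrm)?)
  done

lemma c6a: "(lcp (CP X J) \<otimes> \<iota> A) ;; (\<iota> (FO (CP X J)) \<otimes> (FM (p1 X J) \<otimes> \<iota> A)) ;; (FM (p1 X J) \<otimes> \<iota> (FO X \<odot> A))
   = (FM (p1 X J) \<otimes> \<iota> A) ;; (lcp X \<otimes> \<iota> A)"
  apply (subst L_tensm_assoc[symmetric]; ((rule ty refl, ((rule ty refl | simp add: nrm)+)?)?))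
  apply (subst L_tensm_id[symmetric])
  apply (subst L_tensm_assoc[symmetric]; ((rule ty refl, ((rule ty refl | simp add: nrm)+)?)?))
  apply (subst L_tensm_comp[symmetric]; ((rule ty refl, ((rule ty refl | simp add: nrm)+)?)?))+
  apply (subst Lidl; ((rule ty refl, ((rule ty refl | simp add: nrm)+)?)?))+
  apply (subst L_assoc; ((rule ty refl, ((rule ty refl | simp add: nrm)+)?)?))
  apply (subst L_tensm_comp[symmetric, of "\<iota> (FO (CP X J))"]; ((rule ty refl, ((rule ty refl | simp add: nrm)+)?)?))
  apply (subst Lidl Lidr; ((rule ty refl, ((rule ty refl | simp add: nrm)+)?)?))+
  apply (subst cnat; ((rule ty refl, ((rule ty refl | simp add: nrm)+)?)?))
  apply ((rule refl | simp only: nrm)?)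
  done

lemma conj6: assumes u: "hom u (FO X \<odot> A) B" and v: "hom v (FO X \<odot> B) C"
  shows "(FM (p1 X J) \<otimes> \<iota> A) ;; ((lcp X \<otimes> \<iota> A) ;; (FM (cid X) \<otimes> u) ;; v)
   = (lcp (CP X J) \<otimes> \<iota> A) ;; (FM (cid (CP X J)) \<otimes> ((FM (p1 X J) \<otimes> \<iota> A) ;; u)) ;; ((FM (p1 X J) \<otimes> \<iota> B) ;; v)"
  apply (subst F_id)+
  apply (subst ts2'[of "FM (p1 X J) \<otimes> \<iota> A"]; ((rule ty tyconv[OF u] tyconv[OF v] refl, ((rule ty tyconv[OF u] tyconv[OF v] refl | simp add: nrm)+)?)?))
  apply (subst L_assoc[symmetric]; ((rule ty tyconv[OF u] tyconv[OF v] refl, ((rule ty tyconv[OF u] tyconv[OF v] refl | simp add: nrm)+)?)?))+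
  apply (subst al[OF ic]; ((rule ty tyconv[OF u] tyconv[OF v] refl, ((rule ty tyconv[OF u] tyconv[OF v] refl | simp add: nrm)+)?)?))
  apply (subst L_assoc[symmetric]; ((rule ty tyconv[OF u] tyconv[OF v] refl, ((rule ty tyconv[OF u] tyconv[OF v] refl | simp add: nrm)+)?)?))+
  apply (subst c6a)
  apply ((rule refl | simp only: nrm)?)
  done

lemma conj5: "(FM (p1 X J) \<otimes> \<iota> A) ;; (lw X \<otimes> \<iota> A) = lw (CP X J) \<otimes> \<iota> A"
  apply (subst L_tensm_comp[symmetric]; ((rule ty refl, ((rule ty refl | simp add: nrm)+)?)?))
  apply (subst W1; ((rule ty refl, ((rule ty refl | simp add: nrm)+)?)?))
  apply (subst Lidl; ((rule ty refl, ((rule ty refl | simp add: nrm)+)?)?))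
  done

lemma nu: "(mmi X J \<otimes> \<iota> A) ;; (lw X \<otimes> \<iota> (FO J \<odot> A)) = FM (p2 X J) \<otimes> \<iota> A"
  apply (subst L_tensm_id[symmetric])
  apply (subst L_tensm_assoc[symmetric]; ((rule ty refl, ((rule ty refl | simp add: nrm)+)?)?))
  apply (subst L_tensm_comp[symmetric]; ((rule ty refl, ((rule ty refl | simp add: nrm)+)?)?))
  apply (subst W2)
  apply (subst Lidl; ((rule ty refl, ((rule ty refl | simp add: nrm)+)?)?))
  done



lemma tsplit: assumes k: "hom k P Q" and u: "hom u A' B"
  shows "k \<otimes> u = (k \<otimes> \<iota> A') ;; (\<iota> Q \<otimes> u)"
  apply (subst L_tensm_comp[symmetric]; ((rule ty tyconv[OF k] tyconv[OF u] refl, ((rule ty tyconv[OF k] tyconv[OF u] refl | simp add: nrm)+)?)?))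
  apply (subst Lidl Lidr; ((rule ty tyconv[OF k] tyconv[OF u] refl, ((rule ty tyconv[OF k] tyconv[OF u] refl | simp add: nrm)+)?)?))+
  apply ((rule refl | simp only: nrm)?)
  done

lemma mp1: "mm X J ;; FM (p1 X J) = \<iota> (FO X) \<otimes> lw J"
  by (subst W3[symmetric], subst L_assoc[symmetric]; ((rule ty refl, ((rule ty refl | simp add: nrm)+)?)?)) (subst F_m_minv, subst Lidl; ((rule ty refl, ((rule ty refl | simp add: nrm)+)?)?))

lemma Kw2: "KK X J ;; (lw J \<otimes> \<iota> (FO (CP X J))) = mm X J"
  apply (subst Kform)
  apply (subst al[OF W2]; ((rule ty refl, ((rule ty refl | simp add: nrm)+)?)?))
  apply (subst al[OF F_comp[symmetric]]; ((rule ty refl, ((rule ty refl | simp add: nrm)+)?)?))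
  apply (subst CI_kp2)
  apply (subst F_id)
  apply (subst Lidr; ((rule ty refl, ((rule ty refl | simp add: nrm)+)?)?))
  done

lemma cww: "lcp X ;; (lw X \<otimes> lw X) = lw X"
  apply (subst tsplit[of "lw X"]; ((rule ty refl, ((rule ty refl | simp add: nrm)+)?)?))
  apply (subst L_tensm_unit_left; ((rule ty refl, ((rule ty refl | simp add: nrm)+)?)?))
  apply (subst L_assoc[symmetric]; ((rule ty refl, ((rule ty refl | simp add: nrm)+)?)?))
  apply (subst cw1)
  apply (subst Lidl; ((rule ty refl, ((rule ty refl | simp add: nrm)+)?)?))
  done

lemma gcore: "(lcp X \<otimes> \<iota> (FO J)) ;; (\<iota> (FO X) \<otimes> KK X J) ;; ((lw X \<otimes> lw J) \<otimes> \<iota> (FO (CP X J))) = mm X J"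
  apply (subst L_tensm_assoc[of "lw X"]; ((rule ty refl, ((rule ty refl | simp add: nrm)+)?)?))
  apply (subst al[OF L_tensm_comp[symmetric]]; ((rule ty refl, ((rule ty refl | simp add: nrm)+)?)?))
  apply (subst Kw2)
  apply (subst Lidl; ((rule ty refl, ((rule ty refl | simp add: nrm)+)?)?))
  apply (subst tsplit[of "lw X" _ _ "mm X J"]; ((rule ty refl, ((rule ty refl | simp add: nrm)+)?)?))
  apply (subst L_tensm_unit_left; ((rule ty refl, ((rule ty refl | simp add: nrm)+)?)?))
  apply (subst L_assoc[symmetric]; ((rule ty refl, ((rule ty refl | simp add: nrm)+)?)?))
  apply (subst L_tensm_id[symmetric])
  apply (subst L_tensm_assoc[symmetric, of "lw X"]; ((rule ty refl, ((rule ty refl | simp add: nrm)+)?)?))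
  apply (subst L_tensm_comp[symmetric, of "lcp X"]; ((rule ty refl, ((rule ty refl | simp add: nrm)+)?)?))
  apply (subst cw1)
  apply (subst Lidl; ((rule ty refl, ((rule ty refl | simp add: nrm)+)?)?))
  apply (subst L_tensm_id)
  apply (subst Lidl; ((rule ty refl, ((rule ty refl | simp add: nrm)+)?)?))
  done

lemma gA: "(lcp X \<otimes> \<iota> (FO J \<odot> A)) ;; (\<iota> (FO X) \<otimes> (KK X J \<otimes> \<iota> A)) ;; ((lw X \<otimes> lw J) \<otimes> \<iota> (FO (CP X J) \<odot> A)) = mm X J \<otimes> \<iota> A"
  apply (subst L_tensm_id[symmetric])+
  apply (subst L_tensm_assoc[symmetric]; ((rule ty refl, ((rule ty refl | simp add: nrm)+)?)?))+
  apply (subst L_tensm_comp[symmetric, of "lcp X \<otimes> \<iota> (FO J)"]; ((rule ty refl, ((rule ty refl | simp add: nrm)+)?)?))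
  apply (subst Lidl; ((rule ty refl, ((rule ty refl | simp add: nrm)+)?)?))
  apply (subst L_tensm_comp[symmetric, of "(lcp X \<otimes> \<iota> (FO J)) ;; (\<iota> (FO X) \<otimes> KK X J)"]; ((rule ty refl, ((rule ty refl | simp add: nrm)+)?)?))
  apply (subst Lidl; ((rule ty refl, ((rule ty refl | simp add: nrm)+)?)?))
  apply (subst gcore)
  apply ((rule refl | simp only: nrm)?)
  done

lemma G: assumes w: "hom w (FO (CP X J) \<odot> A) Bw"
  shows "(lcp X \<otimes> \<iota> (FO J \<odot> A)) ;; (FM (cid X) \<otimes> Sg X J A w) ;; ((lw X \<otimes> lw J) \<otimes> \<iota> Bw) = (mm X J \<otimes> \<iota> A) ;; w"
  apply (subst Sform[OF w])
  apply (subst F_id)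
  apply (subst ts2'[of "KK X J \<otimes> \<iota> A"]; ((rule ty tyconv[OF w] refl, ((rule ty tyconv[OF w] refl | simp add: nrm)+)?)?))
  apply (subst L_assoc[symmetric]; ((rule ty tyconv[OF w] refl, ((rule ty tyconv[OF w] refl | simp add: nrm)+)?)?))+
  apply (subst L_tensm_assoc[symmetric, of "\<iota> (FO X)" _ _ "\<iota> (FO J)" _ _ w]; ((rule ty tyconv[OF w] refl, ((rule ty tyconv[OF w] refl | simp add: nrm)+)?)?))
  apply (subst L_tensm_id)
  apply (subst al[OF ic]; ((rule ty tyconv[OF w] refl, ((rule ty tyconv[OF w] refl | simp add: nrm)+)?)?))
  apply (simp only: nrm)
  apply (subst L_tensm_unit_left; ((rule ty tyconv[OF w] refl, ((rule ty tyconv[OF w] refl | simp add: nrm)+)?)?))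
  apply (subst L_assoc[symmetric]; ((rule ty tyconv[OF w] refl, ((rule ty tyconv[OF w] refl | simp add: nrm)+)?)?))+
  apply (subst gA[simplified nrm])
  apply ((rule refl | simp only: nrm)?)
  done



lemma c8: "lcp (CP X J) ;; (\<iota> (FO (CP X J)) \<otimes> FM (p2 X J)) ;; (FM (p1 X J) \<otimes> \<iota> (FO J)) ;; KK X J
   = lcp (CP X J) ;; (FM (p2 X J) \<otimes> \<iota> (FO (CP X J)))"
  apply (subst al[OF L_tensm_comp[symmetric]]; ((rule ty refl, ((rule ty refl | simp add: nrm)+)?)?))
  apply (subst Lidl Lidr; ((rule ty refl, ((rule ty refl | simp add: nrm)+)?)?))+
  apply (subst cF; ((rule ty refl, ((rule ty refl | simp add: nrm)+)?)?))
  apply (subst CI_p12)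
  apply (subst F_id)
  apply (subst Lidl; ((rule ty refl, ((rule ty refl | simp add: nrm)+)?)?))
  apply (subst Kform)
  apply (subst L_assoc[symmetric]; ((rule ty refl, ((rule ty refl | simp add: nrm)+)?)?))+
  apply (subst F_minv_m)
  apply (subst Lidl; ((rule ty refl, ((rule ty refl | simp add: nrm)+)?)?))
  apply (subst Fid_t2)
  apply (subst cF; ((rule ty refl, ((rule ty refl | simp add: nrm)+)?)?))
  apply (subst CI_p2)
  apply ((rule refl | simp only: nrm)?)
  done

lemma c8a: "(lcp (CP X J) \<otimes> \<iota> A) ;; (\<iota> (FO (CP X J)) \<otimes> (FM (p2 X J) \<otimes> \<iota> A)) ;; (FM (p1 X J) \<otimes> \<iota> (FO J \<odot> A)) ;; (KK X J \<otimes> \<iota> A)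
   = (lcp (CP X J) \<otimes> \<iota> A) ;; (FM (p2 X J) \<otimes> \<iota> (FO (CP X J) \<odot> A))"
  apply (subst L_tensm_id[symmetric])+
  apply (subst L_tensm_assoc[symmetric]; ((rule ty refl, ((rule ty refl | simp add: nrm)+)?)?))+
  apply (subst L_tensm_comp[symmetric, of "lcp (CP X J)"]; ((rule ty refl, ((rule ty refl | simp add: nrm)+)?)?))+
  apply (subst Lidl; ((rule ty refl, ((rule ty refl | simp add: nrm)+)?)?))+
  apply (subst L_tensm_comp[symmetric, of "lcp (CP X J) ;; (\<iota> (FO (CP X J)) \<otimes> FM (p2 X J))"]; ((rule ty refl, ((rule ty refl | simp add: nrm)+)?)?))
  apply (subst Lidl; ((rule ty refl, ((rule ty refl | simp add: nrm)+)?)?))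
  apply (subst L_tensm_comp[symmetric, of "lcp (CP X J) ;; (\<iota> (FO (CP X J)) \<otimes> FM (p2 X J)) ;; (FM (p1 X J) \<otimes> \<iota> (FO J))"]; ((rule ty refl, ((rule ty refl | simp add: nrm)+)?)?))
  apply (subst Lidl; ((rule ty refl, ((rule ty refl | simp add: nrm)+)?)?))
  apply (subst c8)
  apply ((rule refl | simp only: nrm)?)
  done

lemma conj8: assumes u: "hom u (FO (CP X J) \<odot> A) B"
  shows "(lcp (CP X J) \<otimes> \<iota> A) ;; (FM (cid (CP X J)) \<otimes> u) ;; ((mmi X J \<otimes> \<iota> B) ;; (lw X \<otimes> \<iota> (FO J \<odot> B)))
   = (lcp (CP X J) \<otimes> \<iota> A) ;; (FM (cid (CP X J)) \<otimes> ((mmi X J \<otimes> \<iota> A) ;; (lw X \<otimes> \<iota> (FO J \<odot> A))))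
       ;; ((FM (p1 X J) \<otimes> \<iota> (FO J \<odot> A)) ;; Sg X J A u)"
  apply (subst nu)+
  apply (subst F_id)+
  apply (subst Sform[OF u])
  apply (subst L_assoc[symmetric]; ((rule ty tyconv[OF u] refl, ((rule ty tyconv[OF u] refl | simp add: nrm)+)?)?))+
  apply (subst c8a)
  apply (subst al[OF ic]; ((rule ty tyconv[OF u] refl, ((rule ty tyconv[OF u] refl | simp add: nrm)+)?)?))
  apply (subst L_assoc[symmetric]; ((rule ty tyconv[OF u] refl, ((rule ty tyconv[OF u] refl | simp add: nrm)+)?)?))+
  apply ((rule refl | simp only: nrm)?)
  done

lemma conj10: assumes v: "hom v (FO X \<odot> A) B"
  shows "(lcp X \<otimes> \<iota> (FO J \<odot> A)) ;; (FM (cid X) \<otimes> Sg X J A ((FM (p1 X J) \<otimes> \<iota> A) ;; v)) ;; ((lw X \<otimes> lw J) \<otimes> \<iota> B)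
    = (lcp X \<otimes> \<iota> (FO J \<odot> A)) ;; (FM (cid X) \<otimes> ((lw X \<otimes> lw J) \<otimes> \<iota> A)) ;; v"
  apply (subst G; ((rule ty tyconv[OF v] refl, ((rule ty tyconv[OF v] refl | simp add: nrm)+)?)?))
  apply (subst L_assoc[symmetric]; ((rule ty tyconv[OF v] refl, ((rule ty tyconv[OF v] refl | simp add: nrm)+)?)?))
  apply (subst L_tensm_comp[symmetric, of "mm X J"]; ((rule ty tyconv[OF v] refl, ((rule ty tyconv[OF v] refl | simp add: nrm)+)?)?))
  apply (subst mp1)
  apply (subst Lidl; ((rule ty tyconv[OF v] refl, ((rule ty tyconv[OF v] refl | simp add: nrm)+)?)?))
  apply (subst F_id)
  apply (subst L_tensm_id[symmetric])
  apply (subst L_tensm_assoc[symmetric, of "lcp X"]; ((rule ty tyconv[OF v] refl, ((rule ty tyconv[OF v] refl | simp add: nrm)+)?)?))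
  apply (subst L_tensm_assoc[symmetric, of "\<iota> (FO X)"]; ((rule ty tyconv[OF v] refl, ((rule ty tyconv[OF v] refl | simp add: nrm)+)?)?))
  apply (subst L_tensm_comp[symmetric, of "lcp X \<otimes> \<iota> (FO J)"]; ((rule ty tyconv[OF v] refl, ((rule ty tyconv[OF v] refl | simp add: nrm)+)?)?))
  apply (subst Lidl; ((rule ty tyconv[OF v] refl, ((rule ty tyconv[OF v] refl | simp add: nrm)+)?)?))
  apply (subst L_tensm_assoc[symmetric, of "\<iota> (FO X)" _ _ "lw X"]; ((rule ty tyconv[OF v] refl, ((rule ty tyconv[OF v] refl | simp add: nrm)+)?)?))
  apply (subst L_tensm_comp[symmetric, of "lcp X"]; ((rule ty tyconv[OF v] refl, ((rule ty tyconv[OF v] refl | simp add: nrm)+)?)?))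
  apply (subst cw2)
  apply (subst Lidl; ((rule ty tyconv[OF v] refl, ((rule ty tyconv[OF v] refl | simp add: nrm)+)?)?))
  apply ((rule refl | simp only: nrm)?)
  done

lemma conj11: "(lcp X \<otimes> \<iota> (FO J \<odot> A)) ;; (FM (cid X) \<otimes> Sg X J A ((mmi X J \<otimes> \<iota> A) ;; (lw X \<otimes> \<iota> (FO J \<odot> A))))
     ;; ((lw X \<otimes> lw J) \<otimes> \<iota> (FO J \<odot> A)) = lw X \<otimes> \<iota> (FO J \<odot> A)"
  apply (subst G; ((rule ty refl, ((rule ty refl | simp add: nrm)+)?)?))
  apply (subst L_assoc[symmetric]; ((rule ty refl, ((rule ty refl | simp add: nrm)+)?)?))
  apply (subst canc2[of X J A, simplified nrm, symmetric, simplified nrm] L_tensm_comp[symmetric, of "mm X J"]; ((rule ty refl, ((rule ty refl | simp add: nrm)+)?)?))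
  apply (subst F_m_minv)
  apply (subst Lidl; ((rule ty refl, ((rule ty refl | simp add: nrm)+)?)?))
  apply (subst L_tensm_id)
  apply (subst Lidl; ((rule ty refl, ((rule ty refl | simp add: nrm)+)?)?))
  done

lemma conj12: "(lcp (CP X J) \<otimes> \<iota> A) ;; (FM (cid (CP X J)) \<otimes> ((mmi X J \<otimes> \<iota> A) ;; (lw X \<otimes> \<iota> (FO J \<odot> A))))
     ;; ((FM (p1 X J) \<otimes> \<iota> (FO J \<odot> A)) ;; ((lw X \<otimes> lw J) \<otimes> \<iota> A)) = lw (CP X J) \<otimes> \<iota> A"
  apply (subst nu)
  apply (subst F_id)
  apply (subst L_tensm_id[symmetric, of "FO J" A])
  apply (subst L_tensm_assoc[of "lw X"]; ((rule ty refl, ((rule ty refl | simp add: nrm)+)?)?))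
  apply (subst L_tensm_comp[symmetric, of "FM (p1 X J)"]; ((rule ty refl, ((rule ty refl | simp add: nrm)+)?)?))
  apply (subst W1; ((rule ty refl, ((rule ty refl | simp add: nrm)+)?)?))
  apply (subst L_tensm_comp[symmetric, of "\<iota> (FO J)"]; ((rule ty refl, ((rule ty refl | simp add: nrm)+)?)?))
  apply (subst Lidl; ((rule ty refl, ((rule ty refl | simp add: nrm)+)?)?))+
  apply (subst L_assoc; ((rule ty refl, ((rule ty refl | simp add: nrm)+)?)?))
  apply (subst L_tensm_comp[symmetric, of "\<iota> (FO (CP X J))"]; ((rule ty refl, ((rule ty refl | simp add: nrm)+)?)?))
  apply (subst Lidl; ((rule ty refl, ((rule ty refl | simp add: nrm)+)?)?))
  apply (subst L_tensm_comp[symmetric, of "FM (p2 X J)"]; ((rule ty refl, ((rule ty refl | simp add: nrm)+)?)?))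
  apply (subst W1; ((rule ty refl, ((rule ty refl | simp add: nrm)+)?)?))
  apply (subst Lidl; ((rule ty refl, ((rule ty refl | simp add: nrm)+)?)?))
  apply (subst L_tensm_assoc[symmetric, of "lw (CP X J)"]; ((rule ty refl, ((rule ty refl | simp add: nrm)+)?)?))
  apply (subst L_tensm_comp[symmetric, of "lcp (CP X J)"]; ((rule ty refl, ((rule ty refl | simp add: nrm)+)?)?))
  apply (subst cww)
  apply (subst Lidl; ((rule ty refl, ((rule ty refl | simp add: nrm)+)?)?))
  done



lemma fib_mem: "u \<in> fib_hom D Y A B \<longleftrightarrow> (\<exists>u2. u = (cid Y, u2) \<and> hom u2 (FO Y \<odot> A) B)"
  unfolding fib_hom_def ls_hom_def by (cases u) (auto simp: C_id_hom)

lemma fib_memI: "hom u2 (FO Y \<odot> A) B \<Longrightarrow> (cid Y, u2) \<in> fib_hom D Y A B"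
  unfolding fib_mem by simp

lemma conj3: assumes u: "hom u (FO (CP X J) \<odot> A) B" and v: "hom v (FO (CP X J) \<odot> B) C"
  shows "Sg X J A ((lcp (CP X J) \<otimes> \<iota> A) ;; (FM (cid (CP X J)) \<otimes> u) ;; v)
    = (lcp X \<otimes> \<iota> (FO J \<odot> A)) ;; (FM (cid X) \<otimes> Sg X J A u) ;; Sg X J B v"
proof -
  have "Sg X J A ((lcp (CP X J) \<otimes> \<iota> A) ;; (FM (cid (CP X J)) \<otimes> u) ;; v)
     = (KK X J \<otimes> \<iota> A) ;; (\<iota> (FO J) \<otimes> ((lcp (CP X J) \<otimes> \<iota> A) ;; (FM (cid (CP X J)) \<otimes> u) ;; v))"
    by (rule Sform; ((rule ty tyconv[OF u] tyconv[OF v] refl, ((rule ty tyconv[OF u] tyconv[OF v] refl | simp add: nrm)+)?)?))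
  also have "\<dots> = NN X J A u v" by (rule conj3L[OF u v])
  also have "\<dots> = (lcp X \<otimes> \<iota> (FO J \<odot> A)) ;; (FM (cid X) \<otimes> Sg X J A u) ;; Sg X J B v"
    by (subst Sform[OF u], subst Sform[OF v], rule conj3R[OF u v, symmetric])
  finally show ?thesis .
qed

lemma cc_id: "cid X \<bullet> cid X = cid X" by (rule C_id_left[OF C_id_hom])

end

theorem proposition3p23:
  fixes D :: "('x, 'f, 'l, 'g, 'z) lnl_data_scheme" and X J :: 'x
  assumes "lnl_adjunction D"
  defines "XJ \<equiv> C_prod D X J"
  shows
    \<comment> \<open>\<Sigma>_(X,J) is a functor LS(C)_(X\<times>J) \<rightarrow> LS(C)_X\<close>
    "(\<forall>A B u. u \<in> fib_hom D XJ A B \<longrightarrow>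
        Sigma_mor D X J (XJ, A) u \<in> fib_hom D X (snd (Sigma_ob D X J (XJ, A))) (snd (Sigma_ob D X J (XJ, B))))
   \<and> (\<forall>A. Sigma_mor D X J (XJ, A) (ls_id D (XJ, A)) = ls_id D (Sigma_ob D X J (XJ, A)))
   \<and> (\<forall>A B C u v. u \<in> fib_hom D XJ A B \<longrightarrow> v \<in> fib_hom D XJ B C \<longrightarrow>
        Sigma_mor D X J (XJ, A) (ls_comp D (XJ, A) u v)
        = ls_comp D (Sigma_ob D X J (XJ, A)) (Sigma_mor D X J (XJ, A) u) (Sigma_mor D X J (XJ, B) v))
    \<comment> \<open>\<pi>1^* is a functor LS(C)_X \<rightarrow> LS(C)_(X\<times>J)\<close>
   \<and> (\<forall>A B v. v \<in> fib_hom D X A B \<longrightarrow>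
        reindex_mor D (C_p1 D X J) XJ (X, A) v
          \<in> fib_hom D XJ (snd (reindex_ob XJ (X, A))) (snd (reindex_ob XJ (X, B))))
   \<and> (\<forall>A. reindex_mor D (C_p1 D X J) XJ (X, A) (ls_id D (X, A)) = ls_id D (reindex_ob XJ (X, A)))
   \<and> (\<forall>A B C u v. u \<in> fib_hom D X A B \<longrightarrow> v \<in> fib_hom D X B C \<longrightarrow>
        reindex_mor D (C_p1 D X J) XJ (X, A) (ls_comp D (X, A) u v)
        = ls_comp D (reindex_ob XJ (X, A)) (reindex_mor D (C_p1 D X J) XJ (X, A) u)
                                            (reindex_mor D (C_p1 D X J) XJ (X, B) v))
    \<comment> \<open>\<nu> : Id \<Rightarrow> \<Sigma>;\<pi>1^* is a natural transformation\<close>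
   \<and> (\<forall>A. Sigma_unit D X J (XJ, A)
          \<in> fib_hom D XJ A (snd (reindex_ob XJ (Sigma_ob D X J (XJ, A)))))
   \<and> (\<forall>A B u. u \<in> fib_hom D XJ A B \<longrightarrow>
        ls_comp D (XJ, A) u (Sigma_unit D X J (XJ, B))
        = ls_comp D (XJ, A) (Sigma_unit D X J (XJ, A))
            (reindex_mor D (C_p1 D X J) XJ (Sigma_ob D X J (XJ, A)) (Sigma_mor D X J (XJ, A) u)))
    \<comment> \<open>\<mu> : \<pi>1^*;\<Sigma> \<Rightarrow> Id is a natural transformation\<close>
   \<and> (\<forall>A. Sigma_counit D X J (X, A)
          \<in> fib_hom D X (snd (Sigma_ob D X J (reindex_ob XJ (X, A)))) A)
   \<and> (\<forall>A B v. v \<in> fib_hom D X A B \<longrightarrow>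
        ls_comp D (Sigma_ob D X J (reindex_ob XJ (X, A)))
          (Sigma_mor D X J (reindex_ob XJ (X, A)) (reindex_mor D (C_p1 D X J) XJ (X, A) v))
          (Sigma_counit D X J (X, B))
        = ls_comp D (Sigma_ob D X J (reindex_ob XJ (X, A))) (Sigma_counit D X J (X, A)) v)
    \<comment> \<open>triangle identities\<close>
   \<and> (\<forall>A. ls_comp D (Sigma_ob D X J (XJ, A))
          (Sigma_mor D X J (XJ, A) (Sigma_unit D X J (XJ, A)))
          (Sigma_counit D X J (Sigma_ob D X J (XJ, A)))
        = ls_id D (Sigma_ob D X J (XJ, A)))
   \<and> (\<forall>A. ls_comp D (reindex_ob XJ (X, A))
          (Sigma_unit D X J (reindex_ob XJ (X, A)))
          (reindex_mor D (C_p1 D X J) XJ (Sigma_ob D X J (reindex_ob XJ (X, A))) (Sigma_counit D X J (X, A)))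
        = ls_id D (reindex_ob XJ (X, A)))"
proof -
  interpret lnl_adjunction D by fact
  note defs = Sigma_mor_def Sigma_ob_def Sigma_unit_def Sigma_counit_def reindex_mor_def reindex_ob_def
    ls_comp_def ls_id_def XJ_def
  show ?thesis
    apply (intro conjI allI impI)
    subgoal for A B u
      apply (clarsimp simp: fib_mem)
      apply (simp add: defs)
      apply ((rule ty refl | (rule tyconv, assumption) | simp add: nrm)+)
      done
    subgoal for A
      apply (simp add: defs)
      apply (rule conj2)
      done
    subgoal for A B C u v
      apply (clarsimp simp: fib_mem)
      apply (simp add: defs cc_id)
      apply (rule conj3; assumption)
      done
    subgoal for A B v
      apply (clarsimp simp: fib_mem)
      apply (simp add: defs)
      apply ((rule ty refl | (rule tyconv, assumption) | simp add: nrm)+)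
      done
    subgoal for A
      apply (simp add: defs)
      apply (rule conj5)
      done
    subgoal for A B C u v
      apply (clarsimp simp: fib_mem)
      apply (simp add: defs cc_id)
      apply (rule conj6; assumption)
      done
    subgoal for A
      apply (simp add: defs fib_mem)
      apply ((rule ty refl | (rule tyconv, assumption) | simp add: nrm)+)
      done
    subgoal for A B u
      apply (clarsimp simp: fib_mem)
      apply (simp add: defs cc_id)
      apply (rule conj8; assumption)
      done
    subgoal for A
      apply (simp add: defs fib_mem)
      apply ((rule ty refl | (rule tyconv, assumption) | simp add: nrm)+)
      done
    subgoal for A B v
      apply (clarsimp simp: fib_mem)
      apply (simp add: defs cc_id)
      apply (rule conj10; assumption)
      done
    subgoal for A
      apply (simp add: defs cc_id)
      apply (rule conj11)
      done
    subgoal for A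
      apply (simp add: defs cc_id)
      apply (rule conj12)
      done
    done
qed

end
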